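(* Assume $n$ is sufficiently large and $2\le r<\sqrt[5]{\ln n}$. Let $H=(V,E)$ be an $n$-uniform hypergraph, let $1\le k\le i\le r$, and let $H'=(C_1,\dots,C_k)$ be an ordered $k$-tuple of edges of $H$. If the weights $\sigma(v)$, $v\in V$, are independent and uniformly distributed on $[0,1)$, then the probability that $H'$ is an ordered $k$-chain for color $i$ is at most $$2\left(\frac{\ln n}{n}\right)^{\frac{k(r-1)}{r}}r^{-(n-1)k-1}.$$
   Context: Setting: $H=(V,E)$ an $n$-uniform hypergraph, colors $\{1,\dots,r\}$. Put $p=\frac{r-1}{r}\cdot\frac{\ln(n/\ln n)}{n}$. Partition $[0,1)$ into consecutive half-open intervals $\Delta_1,\delta_1,\dots,\delta_{r-1},\Delta_r$ (left to right), $\Delta_i=\big[(i-1)(\tfrac{1-p}{r}+\tfrac{p}{r-1}),\ i\tfrac{1-p}{r}+(i-1)\tfrac{p}{r-1}\big)$, $\delta_i=\big[i\tfrac{1-p}{r}+(i-1)\tfrac{p}{r-1},\ i(\tfrac{1-p}{r}+\tfrac{p}{r-1})\big)$. For injective $\sigma:V\to[0,1)$ (which holds almost surely), a vertex $v$ belongs to interval $I$ if $\sigma(v)\in I$; the first (last) vertex of a vertex set is its vertex of smallest (largest) weight. Algorithm 1: every vertex in $\Delta_i$ gets color $i$; then vertices in $\bigcup_i\delta_i$ are processed in increasing weight order, and $v\in\delta_i$ gets color $i$ unless some edge containing $v$ has all its other vertices already colored $i$, in which case $v$ gets color $i+1$; the result is $C^0$. A sequence $(C_1,\dots,C_k)$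 of edges is an ordered $k$-chain for color $i$ ($1\le k\le i\le r$) if: (a) the first vertex of $C_1$ lies in $\Delta_{i-k+1}$; (b) for each $j=1,\dots,k-1$, the last vertex of $C_j$ equals the first vertex of $C_{j+1}$, lies in $\delta_{i-k+j}$, and all other vertices of $C_j$ have color $i-k+j$ in $C^0$; (c) all vertices of $C_k$ have color $i$ in $C^0$. *)

theory Defs
  imports "HOL-Probability.Probability"
begin

definition pp :: "nat \<Rightarrow> nat \<Rightarrow> real" where
  "pp n r = (real r - 1) / real r * (ln (real n / ln (real n)) / real n)"

definition DeltaI :: "nat \<Rightarrow> nat \<Rightarrow> nat \<Rightarrow> real set" where
  "DeltaI n r i = {(real i - 1) * ((1 - pp n r) / real r + pp n r / (real r - 1)) ..<
                   real i * ((1 - pp n r) / real r) + (real i - 1) * (pp n r / (real r - 1))}"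

definition deltaI :: "nat \<Rightarrow> nat \<Rightarrow> nat \<Rightarrow> real set" where
  "deltaI n r i = {real i * ((1 - pp n r) / real r) + (real i - 1) * (pp n r / (real r - 1)) ..<
                   real i * ((1 - pp n r) / real r + pp n r / (real r - 1))}"

text \<open>Characterisation of the colouring C^0 produced by Algorithm 1 for weights sigma.
  A vertex u is already coloured when v is processed iff u lies in some Delta_j, or u lies
  in some delta_j and has smaller weight than v.\<close>
definition alg1_ok :: "nat \<Rightarrow> nat \<Rightarrow> nat set \<Rightarrow> nat set set \<Rightarrow> (nat \<Rightarrow> real) \<Rightarrow> (nat \<Rightarrow> nat) \<Rightarrow> bool" where
  "alg1_ok n r V E \<sigma> c \<longleftrightarrow>
     (\<forall>v. v \<notin> V \<longrightarrow> c v = 0) \<and>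
     (\<forall>v\<in>V. \<sigma> v \<notin> {0..<1} \<longrightarrow> c v = 0) \<and>
     (\<forall>v\<in>V. \<forall>i\<in>{1..r}. \<sigma> v \<in> DeltaI n r i \<longrightarrow> c v = i) \<and>
     (\<forall>v\<in>V. \<forall>i\<in>{1..<r}. \<sigma> v \<in> deltaI n r i \<longrightarrow>
        c v = (if (\<exists>e\<in>E. v \<in> e \<and>
                    (\<forall>u\<in>e - {v}.
                       (\<sigma> u \<in> (\<Union>j\<in>{1..r}. DeltaI n r j) \<or>
                        (\<sigma> u \<in> (\<Union>j\<in>{1..<r}. deltaI n r j) \<and> \<sigma> u < \<sigma> v))
                       \<and> c u = i))
               then i + 1 else i))"

definition alg1_color :: "nat \<Rightarrow> nat \<Rightarrow> nat set \<Rightarrow> nat set set \<Rightarrow> (nat \<Rightarrow> real) \<Rightarrow> nat \<Rightarrow> nat" where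
  "alg1_color n r V E \<sigma> = (THE c. alg1_ok n r V E \<sigma> c)"

definition first_v :: "(nat \<Rightarrow> real) \<Rightarrow> nat set \<Rightarrow> nat" where
  "first_v \<sigma> C = arg_min_on \<sigma> C"

definition last_v :: "(nat \<Rightarrow> real) \<Rightarrow> nat set \<Rightarrow> nat" where
  "last_v \<sigma> C = arg_max_on \<sigma> C"

definition ordered_chain ::
  "nat \<Rightarrow> nat \<Rightarrow> nat set \<Rightarrow> nat set set \<Rightarrow> nat \<Rightarrow> nat \<Rightarrow> (nat \<Rightarrow> nat set) \<Rightarrow> (nat \<Rightarrow> real) \<Rightarrow> bool" where
  "ordered_chain n r V E k i C \<sigma> \<longleftrightarrow>
     \<sigma> (first_v \<sigma> (C 1)) \<in> DeltaI n r (i - k + 1) \<and>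
     (\<forall>j\<in>{1..<k}.
        last_v \<sigma> (C j) = first_v \<sigma> (C (Suc j)) \<and>
        \<sigma> (last_v \<sigma> (C j)) \<in> deltaI n r (i - k + j) \<and>
        (\<forall>u\<in>C j - {last_v \<sigma> (C j)}. alg1_color n r V E \<sigma> u = i - k + j)) \<and>
     (\<forall>u\<in>C k. alg1_color n r V E \<sigma> u = i)"

definition weight_space :: "nat set \<Rightarrow> (nat \<Rightarrow> real) measure" where
  "weight_space V = PiM V (\<lambda>_. uniform_measure lborel {0..<1})"

end

theory Submission
  imports Defs "HOL-Real_Asymp.Real_Asymp"
begin


definition al :: "nat \<Rightarrow> nat \<Rightarrow> real" where "al n r = (1 - pp n r) / real r"
definition be :: "nat \<Rightarrow> nat \<Rightarrow> real" where "be n r = pp n r / (real r - 1)"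
definition ss :: "nat \<Rightarrow> nat \<Rightarrow> real" where "ss n r = al n r + be n r"

lemma DeltaI_eq: "DeltaI n r j = {(real j - 1) * ss n r ..< (real j - 1) * ss n r + al n r}"
proof -
  have "DeltaI n r j = {(real j - 1) * (al n r + be n r) ..< real j * al n r + (real j - 1) * be n r}"
    unfolding DeltaI_def al_def be_def by simp
  also have "real j * al n r + (real j - 1) * be n r = (real j - 1) * ss n r + al n r"
    unfolding ss_def by (simp add: algebra_simps)
  finally show ?thesis by (simp add: ss_def)
qed

lemma deltaI_eq: "deltaI n r j = {(real j - 1) * ss n r + al n r ..< real j * ss n r}"
proof -
  have "deltaI n r j = {real j * al n r + (real j - 1) * be n r ..< real j * (al n r + be n r)}"
    unfolding deltaI_def al_def be_def by simp
  also have "real j * al n r + (real j - 1) * be n r = (real j - 1) * ss n r + al n r"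
    unfolding ss_def by (simp add: algebra_simps)
  finally show ?thesis by (simp add: ss_def)
qed

locale prm =
  fixes n r :: nat
  assumes r2: "2 \<le> r" and p0: "0 < pp n r" and p1: "pp n r < 1"
begin

abbreviation "\<alpha> \<equiv> al n r"
abbreviation "\<beta> \<equiv> be n r"
abbreviation "s \<equiv> ss n r"

lemma al_pos: "0 < \<alpha>" using p1 r2 by (simp add: al_def)
lemma be_pos: "0 < \<beta>" using p0 r2 by (simp add: be_def)
lemma s_pos: "0 < s" using al_pos be_pos by (simp add: ss_def)
lemma total: "real r * \<alpha> + (real r - 1) * \<beta> = 1"
  using r2 by (simp add: al_def be_def field_simps)
lemma rs: "(real r - 1) * s + \<alpha> = 1"
  using total by (simp add: ss_def algebra_simps)

lemma mono_mult_s: "real a \<le> real b \<Longrightarrow> real a * s \<le> real b * s"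
  using s_pos by simp

lemma Delta_block: "x \<in> DeltaI n r j \<Longrightarrow> (real j - 1) * s \<le> x \<and> x < real j * s"
  using be_pos by (auto simp: DeltaI_eq ss_def algebra_simps)
lemma delta_block: "x \<in> deltaI n r j \<Longrightarrow> (real j - 1) * s \<le> x \<and> x < real j * s"
  using al_pos by (auto simp: deltaI_eq algebra_simps)

lemma block_unique:
  assumes "1 \<le> j" "1 \<le> j'" "(real j - 1) * s \<le> x" "x < real j * s"
     "(real j' - 1) * s \<le> x" "x < real j' * s"
  shows "j = j'"
proof (rule ccontr)
  assume "j \<noteq> j'"
  then consider "j < j'" | "j' < j" by linarith
  then show False
  proof cases
    case 1
    then have "real j \<le> real j' - 1" by linarith
    then have "real j * s \<le> (real j' - 1) * s" using s_pos by (simp add: mult_right_mono)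
    then show False using assms by linarith
  next
    case 2
    then have "real j' \<le> real j - 1" by linarith
    then have "real j' * s \<le> (real j - 1) * s" using s_pos by (simp add: mult_right_mono)
    then show False using assms by linarith
  qed
qed

lemma Delta_unique: "1 \<le> j \<Longrightarrow> 1 \<le> j' \<Longrightarrow> x \<in> DeltaI n r j \<Longrightarrow> x \<in> DeltaI n r j' \<Longrightarrow> j = j'"
  using Delta_block block_unique by blast
lemma delta_unique: "1 \<le> j \<Longrightarrow> 1 \<le> j' \<Longrightarrow> x \<in> deltaI n r j \<Longrightarrow> x \<in> deltaI n r j' \<Longrightarrow> j = j'"
  using delta_block block_unique by blast
lemma Delta_delta_disj: "1 \<le> j \<Longrightarrow> 1 \<le> j' \<Longrightarrow> x \<in> DeltaI n r j \<Longrightarrow> x \<in> deltaI n r j' \<Longrightarrow> False"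
proof -
  assume a: "1 \<le> j" "1 \<le> j'" "x \<in> DeltaI n r j" "x \<in> deltaI n r j'"
  then have "j = j'" using Delta_block delta_block block_unique by blast
  then show False using a by (auto simp: DeltaI_eq deltaI_eq)
qed

lemma Delta_sub: "j \<in> {1..r} \<Longrightarrow> DeltaI n r j \<subseteq> {0..<1}"
proof
  fix x assume j: "j \<in> {1..r}" and x: "x \<in> DeltaI n r j"
  have "0 \<le> (real j - 1) * s" using j s_pos by auto
  moreover have "(real j - 1) * s \<le> (real r - 1) * s" using j s_pos by (auto intro!: mult_right_mono)
  ultimately show "x \<in> {0..<1}" using x rs by (auto simp: DeltaI_eq)
qed

lemma delta_sub: "j \<in> {1..<r} \<Longrightarrow> deltaI n r j \<subseteq> {0..<1}"
proof
  fix x assume j: "j \<in> {1..<r}" and x: "x \<in> deltaI n r j"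
  have "0 \<le> (real j - 1) * s" using j s_pos by auto
  moreover have "real j * s \<le> (real r - 1) * s" using j s_pos by (auto intro!: mult_right_mono)
  ultimately show "x \<in> {0..<1}" using x rs al_pos by (auto simp: deltaI_eq)
qed

lemma cover:
  assumes x: "x \<in> {0..<1}"
  shows "(\<exists>j\<in>{1..r}. x \<in> DeltaI n r j) \<or> (\<exists>j\<in>{1..<r}. x \<in> deltaI n r j)"
proof -
  define j where "j = nat \<lfloor>x / s\<rfloor> + 1"
  have fl0: "0 \<le> \<lfloor>x / s\<rfloor>" using x s_pos by auto
  have rj: "real j - 1 = of_int \<lfloor>x / s\<rfloor>" using fl0 by (simp add: j_def)
  have lo: "(real j - 1) * s \<le> x"
    using rj s_pos by (simp add: pos_le_divide_eq[symmetric] )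
  have hi: "x < real j * s"
  proof -
    have "x / s < of_int \<lfloor>x / s\<rfloor> + 1" by linarith
    then have "x / s < real j" using rj by linarith
    then show ?thesis using s_pos by (simp add: pos_divide_less_eq)
  qed
  have j1: "1 \<le> j" by (simp add: j_def)
  have jr: "j \<le> r"
  proof (rule ccontr)
    assume "\<not> j \<le> r"
    then have "real r \<le> real j - 1" by linarith
    then have "real r * s \<le> (real j - 1) * s" using s_pos by (simp add: mult_right_mono)
    moreover have "(real r - 1) * s + \<alpha> = 1" by (rule rs)
    ultimately show False using lo x be_pos by (auto simp: ss_def algebra_simps)
  qed
  show ?thesis
  proof (cases "x < (real j - 1) * s + \<alpha>")
    case True
    then show ?thesis using lo j1 jr by (auto simp: DeltaI_eq)
  next
    case False
    have "j \<noteq> r" using False rs x by auto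
    then show ?thesis using False hi j1 jr by (auto simp: deltaI_eq)
  qed
qed

end

definition dcol :: "nat \<Rightarrow> nat \<Rightarrow> real \<Rightarrow> nat" where
  "dcol n r x = (THE j. j \<in> {1..r} \<and> x \<in> DeltaI n r j)"
definition ecol :: "nat \<Rightarrow> nat \<Rightarrow> real \<Rightarrow> nat" where
  "ecol n r x = (THE j. j \<in> {1..<r} \<and> x \<in> deltaI n r j)"

definition FF :: "nat \<Rightarrow> nat \<Rightarrow> nat set \<Rightarrow> nat set set \<Rightarrow> (nat \<Rightarrow> real) \<Rightarrow> (nat \<Rightarrow> nat) \<Rightarrow> nat \<Rightarrow> nat" where
  "FF n r V E \<sigma> c v = (if v \<notin> V then 0 else if \<sigma> v \<notin> {0..<1} then 0
     else if (\<exists>j\<in>{1..r}. \<sigma> v \<in> DeltaI n r j) then dcol n r (\<sigma> v)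
     else if (\<exists>j\<in>{1..<r}. \<sigma> v \<in> deltaI n r j) then
       (if (\<exists>e\<in>E. v \<in> e \<and> (\<forall>u\<in>e - {v}.
            (\<sigma> u \<in> (\<Union>j\<in>{1..r}. DeltaI n r j) \<or> (\<sigma> u \<in> (\<Union>j\<in>{1..<r}. deltaI n r j) \<and> \<sigma> u < \<sigma> v))
            \<and> (if \<sigma> u < \<sigma> v then c u else dcol n r (\<sigma> u)) = ecol n r (\<sigma> v)))
        then ecol n r (\<sigma> v) + 1 else ecol n r (\<sigma> v))
     else 0)"

definition RR :: "nat set \<Rightarrow> (nat \<Rightarrow> real) \<Rightarrow> (nat \<times> nat) set" where
  "RR V \<sigma> = {(u, v). u \<in> V \<and> \<sigma> u < \<sigma> v}"

lemma wf_RR: assumes "finite V" shows "wf (RR V \<sigma>)"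
proof -
  have "RR V \<sigma> \<subseteq> Wellfounded.measure (\<lambda>v. card {u\<in>V. \<sigma> u < \<sigma> v})"
  proof
    fix x assume "x \<in> RR V \<sigma>"
    then obtain u v where x: "x = (u, v)" "u \<in> V" "\<sigma> u < \<sigma> v" by (auto simp: RR_def)
    have "{w\<in>V. \<sigma> w < \<sigma> u} \<subset> {w\<in>V. \<sigma> w < \<sigma> v}" using x by auto
    then have "card {w\<in>V. \<sigma> w < \<sigma> u} < card {w\<in>V. \<sigma> w < \<sigma> v}"
      using assms by (intro psubset_card_mono) auto
    then show "x \<in> Wellfounded.measure (\<lambda>v. card {u\<in>V. \<sigma> u < \<sigma> v})" using x by simp
  qed
  then show ?thesis using wf_subset by blast
qed

lemma adm_FF: assumes "E \<subseteq> Pow V" shows "adm_wf (RR V \<sigma>) (FF n r V E \<sigma>)"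
  unfolding adm_wf_def
proof (intro allI impI)
  fix f g :: "nat \<Rightarrow> nat" and x
  assume H: "\<forall>z. (z, x) \<in> RR V \<sigma> \<longrightarrow> f z = g z"
  have H': "\<And>e u. e \<in> E \<Longrightarrow> u \<in> e \<Longrightarrow> \<sigma> u < \<sigma> x \<Longrightarrow> f u = g u"
    using H assms by (auto simp: RR_def)
  have "(\<exists>e\<in>E. x \<in> e \<and> (\<forall>u\<in>e - {x}.
            (\<sigma> u \<in> (\<Union>j\<in>{1..r}. DeltaI n r j) \<or> (\<sigma> u \<in> (\<Union>j\<in>{1..<r}. deltaI n r j) \<and> \<sigma> u < \<sigma> x))
            \<and> (if \<sigma> u < \<sigma> x then f u else dcol n r (\<sigma> u)) = ecol n r (\<sigma> x)))
      = (\<exists>e\<in>E. x \<in> e \<and> (\<forall>u\<in>e - {x}.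
            (\<sigma> u \<in> (\<Union>j\<in>{1..r}. DeltaI n r j) \<or> (\<sigma> u \<in> (\<Union>j\<in>{1..<r}. deltaI n r j) \<and> \<sigma> u < \<sigma> x))
            \<and> (if \<sigma> u < \<sigma> x then g u else dcol n r (\<sigma> u)) = ecol n r (\<sigma> x)))"
    using H' by (intro bex_cong conj_cong ball_cong refl) auto
  then show "FF n r V E \<sigma> f x = FF n r V E \<sigma> g x"
    unfolding FF_def by presburger
qed

context prm begin

lemma dcol_eq: "j \<in> {1..r} \<Longrightarrow> x \<in> DeltaI n r j \<Longrightarrow> dcol n r x = j"
  unfolding dcol_def by (rule the_equality) (use Delta_unique in auto)
lemma ecol_eq: "j \<in> {1..<r} \<Longrightarrow> x \<in> deltaI n r j \<Longrightarrow> ecol n r x = j"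
  unfolding ecol_def by (rule the_equality) (use delta_unique in auto)

lemma alg1_exists:
  assumes V: "finite V" and E: "E \<subseteq> Pow V"
  shows "alg1_ok n r V E \<sigma> (wfrec (RR V \<sigma>) (FF n r V E \<sigma>))"
proof -
  define c where "c = wfrec (RR V \<sigma>) (FF n r V E \<sigma>)"
  have fx: "c = FF n r V E \<sigma> c"
    unfolding c_def by (rule wfrec_fixpoint[OF wf_RR[OF V] adm_FF[OF E]])
  have cv: "c v = FF n r V E \<sigma> c v" for v using fx by metis
  have cD: "c v = j" if "v \<in> V" "j \<in> {1..r}" "\<sigma> v \<in> DeltaI n r j" for v j
  proof -
    have "\<sigma> v \<in> {0..<1}" using that Delta_sub[OF that(2)] by blast
    moreover have "\<exists>j\<in>{1..r}. \<sigma> v \<in> DeltaI n r j" using that by blast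
    ultimately have "FF n r V E \<sigma> c v = dcol n r (\<sigma> v)" using that(1) unfolding FF_def by presburger
    then show ?thesis using cv[of v] dcol_eq[OF that(2,3)] by simp
  qed
  have cd: "c v = (if (\<exists>e\<in>E. v \<in> e \<and>
                    (\<forall>u\<in>e - {v}.
                       (\<sigma> u \<in> (\<Union>j\<in>{1..r}. DeltaI n r j) \<or>
                        (\<sigma> u \<in> (\<Union>j\<in>{1..<r}. deltaI n r j) \<and> \<sigma> u < \<sigma> v))
                       \<and> c u = i))
               then i + 1 else i)" if v: "v \<in> V" "i \<in> {1..<r}" "\<sigma> v \<in> deltaI n r i" for v i
  proof -
    have nD: "\<not> (\<exists>j\<in>{1..r}. \<sigma> v \<in> DeltaI n r j)"
      using v Delta_delta_disj by fastforce
    have ec: "ecol n r (\<sigma> v) = i" using ecol_eq v by blast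
    have in01: "\<sigma> v \<in> {0..<1}" using delta_sub v by blast
    have eq: "(\<forall>u\<in>e - {v}.
            (\<sigma> u \<in> (\<Union>j\<in>{1..r}. DeltaI n r j) \<or> (\<sigma> u \<in> (\<Union>j\<in>{1..<r}. deltaI n r j) \<and> \<sigma> u < \<sigma> v))
            \<and> (if \<sigma> u < \<sigma> v then c u else dcol n r (\<sigma> u)) = i)
         = (\<forall>u\<in>e - {v}.
                       (\<sigma> u \<in> (\<Union>j\<in>{1..r}. DeltaI n r j) \<or>
                        (\<sigma> u \<in> (\<Union>j\<in>{1..<r}. deltaI n r j) \<and> \<sigma> u < \<sigma> v))
                       \<and> c u = i)" if e: "e \<in> E" for e
    proof (intro ball_cong refl)
      fix u assume u: "u \<in> e - {v}"
      have uV: "u \<in> V" using u e E by auto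
      show "((\<sigma> u \<in> (\<Union>j\<in>{1..r}. DeltaI n r j) \<or> (\<sigma> u \<in> (\<Union>j\<in>{1..<r}. deltaI n r j) \<and> \<sigma> u < \<sigma> v))
            \<and> (if \<sigma> u < \<sigma> v then c u else dcol n r (\<sigma> u)) = i)
          = ((\<sigma> u \<in> (\<Union>j\<in>{1..r}. DeltaI n r j) \<or>
                        (\<sigma> u \<in> (\<Union>j\<in>{1..<r}. deltaI n r j) \<and> \<sigma> u < \<sigma> v))
                       \<and> c u = i)"
      proof (cases "\<sigma> u \<in> (\<Union>j\<in>{1..r}. DeltaI n r j)")
        case True
        then obtain j where j: "j \<in> {1..r}" "\<sigma> u \<in> DeltaI n r j" by auto
        then show ?thesis using cD[OF uV j] dcol_eq[OF j] by auto
      qed auto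
    qed
    have ex: "\<exists>j\<in>{1..<r}. \<sigma> v \<in> deltaI n r j" using v by blast
    have nout: "\<not> (\<sigma> v \<notin> {0..<1})" using in01 by blast
    have "FF n r V E \<sigma> c v = (if (\<exists>e\<in>E. v \<in> e \<and> (\<forall>u\<in>e - {v}.
            (\<sigma> u \<in> (\<Union>j\<in>{1..r}. DeltaI n r j) \<or> (\<sigma> u \<in> (\<Union>j\<in>{1..<r}. deltaI n r j) \<and> \<sigma> u < \<sigma> v))
            \<and> (if \<sigma> u < \<sigma> v then c u else dcol n r (\<sigma> u)) = ecol n r (\<sigma> v)))
        then ecol n r (\<sigma> v) + 1 else ecol n r (\<sigma> v))"
      unfolding FF_def using v(1) nout nD ex by (simp only: if_True if_False not_True_eq_False)
    also have "\<dots> = (if (\<exists>e\<in>E. v \<in> e \<and>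
                    (\<forall>u\<in>e - {v}.
                       (\<sigma> u \<in> (\<Union>j\<in>{1..r}. DeltaI n r j) \<or>
                        (\<sigma> u \<in> (\<Union>j\<in>{1..<r}. deltaI n r j) \<and> \<sigma> u < \<sigma> v))
                       \<and> c u = i))
               then i + 1 else i)"
      unfolding ec using eq by (intro if_cong bex_cong conj_cong refl) auto
    finally show ?thesis using cv[of v] by simp
  qed
  show ?thesis
    unfolding c_def[symmetric] alg1_ok_def
  proof (intro conjI ballI allI impI)
    show "c v = 0" if "v \<notin> V" for v using that cv[of v] by (simp add: FF_def)
    show "c v = 0" if "v \<in> V" "\<sigma> v \<notin> {0..<1}" for v using that cv[of v] by (simp add: FF_def)
    show "c v = i" if "v \<in> V" "i \<in> {1..r}" "\<sigma> v \<in> DeltaI n r i" for v i using cD that by blast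
    show "c v = (if (\<exists>e\<in>E. v \<in> e \<and>
                    (\<forall>u\<in>e - {v}.
                       (\<sigma> u \<in> (\<Union>j\<in>{1..r}. DeltaI n r j) \<or>
                        (\<sigma> u \<in> (\<Union>j\<in>{1..<r}. deltaI n r j) \<and> \<sigma> u < \<sigma> v))
                       \<and> c u = i))
               then i + 1 else i)" if "v \<in> V" "i \<in> {1..<r}" "\<sigma> v \<in> deltaI n r i" for v i
      using cd that by blast
  qed
qed

lemma alg1_okD:
  assumes "alg1_ok n r V E \<sigma> c"
  shows "v \<notin> V \<Longrightarrow> c v = 0"
    and "v \<in> V \<Longrightarrow> \<sigma> v \<notin> {0..<1} \<Longrightarrow> c v = 0"
    and "v \<in> V \<Longrightarrow> i \<in> {1..r} \<Longrightarrow> \<sigma> v \<in> DeltaI n r i \<Longrightarrow> c v = i"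
    and "v \<in> V \<Longrightarrow> i \<in> {1..<r} \<Longrightarrow> \<sigma> v \<in> deltaI n r i \<Longrightarrow>
        c v = (if (\<exists>e\<in>E. v \<in> e \<and>
                    (\<forall>u\<in>e - {v}.
                       (\<sigma> u \<in> (\<Union>j\<in>{1..r}. DeltaI n r j) \<or>
                        (\<sigma> u \<in> (\<Union>j\<in>{1..<r}. deltaI n r j) \<and> \<sigma> u < \<sigma> v))
                       \<and> c u = i))
               then i + 1 else i)"
proof -
  note A = assms[unfolded alg1_ok_def]
  note A1 = conjunct1[OF A]
  note A2 = conjunct1[OF conjunct2[OF A]]
  note A3 = conjunct1[OF conjunct2[OF conjunct2[OF A]]]
  note A4 = conjunct2[OF conjunct2[OF conjunct2[OF A]]]
  show "v \<notin> V \<Longrightarrow> c v = 0" using A1 by simp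
  show "v \<in> V \<Longrightarrow> \<sigma> v \<notin> {0..<1} \<Longrightarrow> c v = 0" by (rule mp[OF bspec[OF A2]])
  show "v \<in> V \<Longrightarrow> i \<in> {1..r} \<Longrightarrow> \<sigma> v \<in> DeltaI n r i \<Longrightarrow> c v = i"
    by (rule mp[OF bspec[OF bspec[OF A3]]])
  show "v \<in> V \<Longrightarrow> i \<in> {1..<r} \<Longrightarrow> \<sigma> v \<in> deltaI n r i \<Longrightarrow>
        c v = (if (\<exists>e\<in>E. v \<in> e \<and>
                    (\<forall>u\<in>e - {v}.
                       (\<sigma> u \<in> (\<Union>j\<in>{1..r}. DeltaI n r j) \<or>
                        (\<sigma> u \<in> (\<Union>j\<in>{1..<r}. deltaI n r j) \<and> \<sigma> u < \<sigma> v))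
                       \<and> c u = i))
               then i + 1 else i)"
    by (rule mp[OF bspec[OF bspec[OF A4]]])
qed

lemma alg1_unique:
  assumes V: "finite V" and E: "E \<subseteq> Pow V"
    and c1: "alg1_ok n r V E \<sigma> c1" and c2: "alg1_ok n r V E \<sigma> c2"
  shows "c1 = c2"
proof
  fix v
  show "c1 v = c2 v"
  proof (induction v rule: wf_induct[OF wf_RR[OF V, of \<sigma>]])
    case (1 v)
    show ?case
    proof (cases "v \<in> V \<and> \<sigma> v \<in> {0..<1}")
      case False
      then show ?thesis using alg1_okD(1,2)[OF c1, of v] alg1_okD(1,2)[OF c2, of v] by (cases "v \<in> V") auto
    next
      case True
      then have vV: "v \<in> V" and v01: "\<sigma> v \<in> {0..<1}" by auto
      from cover[OF v01] show ?thesis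
      proof
        assume "\<exists>j\<in>{1..r}. \<sigma> v \<in> DeltaI n r j"
        then obtain j where "j \<in> {1..r}" "\<sigma> v \<in> DeltaI n r j" by blast
        then show ?thesis using alg1_okD(3)[OF c1 vV] alg1_okD(3)[OF c2 vV] by metis
      next
        assume "\<exists>j\<in>{1..<r}. \<sigma> v \<in> deltaI n r j"
        then obtain i where i: "i \<in> {1..<r}" "\<sigma> v \<in> deltaI n r i" by blast
        have eq: "(\<forall>u\<in>e - {v}.
                       (\<sigma> u \<in> (\<Union>j\<in>{1..r}. DeltaI n r j) \<or>
                        (\<sigma> u \<in> (\<Union>j\<in>{1..<r}. deltaI n r j) \<and> \<sigma> u < \<sigma> v))
                       \<and> c1 u = i) = (\<forall>u\<in>e - {v}.
                       (\<sigma> u \<in> (\<Union>j\<in>{1..r}. DeltaI n r j) \<or>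
                        (\<sigma> u \<in> (\<Union>j\<in>{1..<r}. deltaI n r j) \<and> \<sigma> u < \<sigma> v))
                       \<and> c2 u = i)" if e: "e \<in> E" for e
        proof (intro ball_cong refl)
          fix u assume u: "u \<in> e - {v}"
          have uV: "u \<in> V" using u e E by auto
          show "((\<sigma> u \<in> (\<Union>j\<in>{1..r}. DeltaI n r j) \<or>
                        (\<sigma> u \<in> (\<Union>j\<in>{1..<r}. deltaI n r j) \<and> \<sigma> u < \<sigma> v))
                       \<and> c1 u = i) = ((\<sigma> u \<in> (\<Union>j\<in>{1..r}. DeltaI n r j) \<or>
                        (\<sigma> u \<in> (\<Union>j\<in>{1..<r}. deltaI n r j) \<and> \<sigma> u < \<sigma> v))
                       \<and> c2 u = i)"
          proof (cases "\<sigma> u \<in> (\<Union>j\<in>{1..r}. DeltaI n r j)")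
            case True
            then obtain j where j: "j \<in> {1..r}" "\<sigma> u \<in> DeltaI n r j" by auto
            have "c1 u = j" "c2 u = j" using alg1_okD(3)[OF c1 uV j] alg1_okD(3)[OF c2 uV j] by auto
            then have "c1 u = c2 u" by simp
            then show ?thesis by (simp only:)
          next
            case False
            have "c1 u = c2 u" if "\<sigma> u < \<sigma> v"
            proof -
              have "(u, v) \<in> RR V \<sigma>" using that uV by (simp add: RR_def)
              then show ?thesis using 1 by blast
            qed
            show ?thesis
            proof (cases "\<sigma> u < \<sigma> v")
              case True
              then have "c1 u = c2 u" using \<open>\<sigma> u < \<sigma> v \<Longrightarrow> c1 u = c2 u\<close> by blast
              then show ?thesis by (simp only:)
            next
              case F2: False
              show ?thesis using False F2 by (simp only: de_Morgan_conj not_False_eq_True simp_thms)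
            qed
          qed
        qed
        have "(\<exists>e\<in>E. v \<in> e \<and>
                    (\<forall>u\<in>e - {v}.
                       (\<sigma> u \<in> (\<Union>j\<in>{1..r}. DeltaI n r j) \<or>
                        (\<sigma> u \<in> (\<Union>j\<in>{1..<r}. deltaI n r j) \<and> \<sigma> u < \<sigma> v))
                       \<and> c1 u = i)) = (\<exists>e\<in>E. v \<in> e \<and>
                    (\<forall>u\<in>e - {v}.
                       (\<sigma> u \<in> (\<Union>j\<in>{1..r}. DeltaI n r j) \<or>
                        (\<sigma> u \<in> (\<Union>j\<in>{1..<r}. deltaI n r j) \<and> \<sigma> u < \<sigma> v))
                       \<and> c2 u = i))"
          using eq by (intro bex_cong conj_cong refl) auto
        then show ?thesis using alg1_okD(4)[OF c1 vV i] alg1_okD(4)[OF c2 vV i] by argo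
      qed
    qed
  qed
qed

lemma alg1_color_ok:
  assumes V: "finite V" and E: "E \<subseteq> Pow V"
  shows "alg1_ok n r V E \<sigma> (alg1_color n r V E \<sigma>)"
  unfolding alg1_color_def
proof (rule theI[of _ "wfrec (RR V \<sigma>) (FF n r V E \<sigma>)"])
  show "alg1_ok n r V E \<sigma> (wfrec (RR V \<sigma>) (FF n r V E \<sigma>))" by (rule alg1_exists[OF V E])
  show "x = wfrec (RR V \<sigma>) (FF n r V E \<sigma>)" if "alg1_ok n r V E \<sigma> x" for x
    by (rule alg1_unique[OF V E that alg1_exists[OF V E]])
qed

end


context prm begin

lemma color_loc:
  assumes V: "finite V" and E: "E \<subseteq> Pow V" and v: "v \<in> V"
    and c: "alg1_color n r V E \<sigma> v = i" and i: "1 \<le> i"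
  shows "\<sigma> v \<in> {0..<1} \<and> (\<sigma> v \<in> DeltaI n r i \<or> (i < r \<and> \<sigma> v \<in> deltaI n r i)
          \<or> (2 \<le> i \<and> \<sigma> v \<in> deltaI n r (i - 1)))"
proof -
  note ok = alg1_color_ok[OF V E, of \<sigma>]
  have v01: "\<sigma> v \<in> {0..<1}"
  proof (rule ccontr)
    assume "\<sigma> v \<notin> {0..<1}"
    then have "alg1_color n r V E \<sigma> v = 0" using alg1_okD(2)[OF ok v] by blast
    then show False using c i by simp
  qed
  from cover[OF v01] show ?thesis
  proof
    assume "\<exists>j\<in>{1..r}. \<sigma> v \<in> DeltaI n r j"
    then obtain j where j: "j \<in> {1..r}" "\<sigma> v \<in> DeltaI n r j" by blast
    then have "alg1_color n r V E \<sigma> v = j" using alg1_okD(3)[OF ok v] by blast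
    then show ?thesis using c j v01 by simp
  next
    assume "\<exists>j\<in>{1..<r}. \<sigma> v \<in> deltaI n r j"
    then obtain j where j: "j \<in> {1..<r}" "\<sigma> v \<in> deltaI n r j" by blast
    have "alg1_color n r V E \<sigma> v = j \<or> alg1_color n r V E \<sigma> v = j + 1"
      using alg1_okD(4)[OF ok v j] by (simp split: if_split)
    then show ?thesis using c j v01 by auto
  qed
qed

lemma color_bump:
  assumes V: "finite V" and E: "E \<subseteq> Pow V" and v: "v \<in> V"
    and i: "i \<in> {1..<r}" and vd: "\<sigma> v \<in> deltaI n r i" and e: "e \<in> E" "v \<in> e"
    and oth: "\<And>u. u \<in> e - {v} \<Longrightarrow> alg1_color n r V E \<sigma> u = i \<and> \<sigma> u \<in> {0..<1} \<and> \<sigma> u < \<sigma> v"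
  shows "alg1_color n r V E \<sigma> v = i + 1"
proof -
  note ok = alg1_color_ok[OF V E, of \<sigma>]
  have "\<forall>u\<in>e - {v}.
                       (\<sigma> u \<in> (\<Union>j\<in>{1..r}. DeltaI n r j) \<or>
                        (\<sigma> u \<in> (\<Union>j\<in>{1..<r}. deltaI n r j) \<and> \<sigma> u < \<sigma> v))
                       \<and> alg1_color n r V E \<sigma> u = i"
  proof
    fix u assume u: "u \<in> e - {v}"
    have "\<sigma> u \<in> {0..<1}" "\<sigma> u < \<sigma> v" "alg1_color n r V E \<sigma> u = i" using oth[OF u] by auto
    then show "(\<sigma> u \<in> (\<Union>j\<in>{1..r}. DeltaI n r j) \<or>
                        (\<sigma> u \<in> (\<Union>j\<in>{1..<r}. deltaI n r j) \<and> \<sigma> u < \<sigma> v))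
                       \<and> alg1_color n r V E \<sigma> u = i"
      using cover[of "\<sigma> u"] by blast
  qed
  then have "\<exists>e\<in>E. v \<in> e \<and> (\<forall>u\<in>e - {v}.
                       (\<sigma> u \<in> (\<Union>j\<in>{1..r}. DeltaI n r j) \<or>
                        (\<sigma> u \<in> (\<Union>j\<in>{1..<r}. deltaI n r j) \<and> \<sigma> u < \<sigma> v))
                       \<and> alg1_color n r V E \<sigma> u = i)" using e by blast
  then show ?thesis using alg1_okD(4)[OF ok v i vd] by (simp only: if_True)
qed

end

abbreviation "UU \<equiv> uniform_measure lborel {0::real..<1}"

lemma UU_prob: "prob_space UU"
  by (rule prob_space_uniform_measure) auto

lemma ws_prob: "prob_space (weight_space V)"
  unfolding weight_space_def by (rule prob_space_PiM) (rule UU_prob)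

lemma space_ws: "space (weight_space V) = PiE V (\<lambda>_. UNIV)"
  by (simp add: weight_space_def space_PiM)

lemma ws_undef: "\<sigma> \<in> space (weight_space V) \<Longrightarrow> v \<notin> V \<Longrightarrow> \<sigma> v = undefined"
  by (simp add: space_ws PiE_def extensional_def)

lemma comp_meas[measurable]: "v \<in> V \<Longrightarrow> (\<lambda>\<sigma>. \<sigma> v) \<in> borel_measurable (weight_space V)"
proof -
  assume v: "v \<in> V"
  have "(\<lambda>\<sigma>. \<sigma> v) \<in> measurable (weight_space V) UU"
    unfolding weight_space_def by (rule measurable_component_singleton[OF v])
  then show ?thesis by (simp add: measurable_def)
qed

lemma meas_inv:
  fixes V :: "nat set" and T :: "real set set"
  assumes fin: "finite V" "finite T" and Tb: "\<And>t. t \<in> T \<Longrightarrow> t \<in> sets borel"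
   and inv: "\<And>\<sigma> \<sigma>'. \<sigma> \<in> space (weight_space V) \<Longrightarrow> \<sigma>' \<in> space (weight_space V) \<Longrightarrow>
      (\<forall>v\<in>V. \<forall>t\<in>T. (\<sigma> v \<in> t) = (\<sigma>' v \<in> t)) \<Longrightarrow> (\<forall>u\<in>V. \<forall>v\<in>V. (\<sigma> u < \<sigma> v) = (\<sigma>' u < \<sigma>' v))
      \<Longrightarrow> P \<sigma> \<Longrightarrow> P \<sigma>'"
  shows "{\<sigma> \<in> space (weight_space V). P \<sigma>} \<in> sets (weight_space V)"
proof -
  let ?M = "weight_space V"
  define sg where "sg \<sigma> = ({(v,t). v \<in> V \<and> t \<in> T \<and> \<sigma> v \<in> t}, {(u,v). u \<in> V \<and> v \<in> V \<and> \<sigma> u < \<sigma> v})"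
    for \<sigma> :: "nat \<Rightarrow> real"
  have eq: "{\<sigma> \<in> space ?M. P \<sigma>} = (\<Union>S \<in> sg ` {\<sigma> \<in> space ?M. P \<sigma>}. {\<sigma> \<in> space ?M. sg \<sigma> = S})"
  proof
    show "{\<sigma> \<in> space ?M. P \<sigma>} \<subseteq> (\<Union>S \<in> sg ` {\<sigma> \<in> space ?M. P \<sigma>}. {\<sigma> \<in> space ?M. sg \<sigma> = S})"
    proof
      fix \<sigma> assume h: "\<sigma> \<in> {\<sigma> \<in> space ?M. P \<sigma>}"
      show "\<sigma> \<in> (\<Union>S \<in> sg ` {\<sigma> \<in> space ?M. P \<sigma>}. {\<sigma> \<in> space ?M. sg \<sigma> = S})"
        by (rule UN_I[OF imageI[OF h]]) (use h in simp)
    qed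
    show "(\<Union>S \<in> sg ` {\<sigma> \<in> space ?M. P \<sigma>}. {\<sigma> \<in> space ?M. sg \<sigma> = S}) \<subseteq> {\<sigma> \<in> space ?M. P \<sigma>}"
    proof
      fix \<sigma> assume "\<sigma> \<in> (\<Union>S \<in> sg ` {\<sigma> \<in> space ?M. P \<sigma>}. {\<sigma> \<in> space ?M. sg \<sigma> = S})"
      then obtain S where S: "S \<in> sg ` {\<sigma> \<in> space ?M. P \<sigma>}" and sS: "\<sigma> \<in> {\<sigma> \<in> space ?M. sg \<sigma> = S}"
        by (rule UN_E)
      from S obtain \<sigma>0 where s0': "\<sigma>0 \<in> {\<sigma> \<in> space ?M. P \<sigma>}" and S0: "S = sg \<sigma>0" by (rule imageE)
      have s0: "\<sigma>0 \<in> space ?M" "P \<sigma>0" using s0' by auto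
      have s: "\<sigma> \<in> space ?M" "sg \<sigma> = sg \<sigma>0" using sS S0 by auto
      have f1: "{(v,t). v \<in> V \<and> t \<in> T \<and> \<sigma> v \<in> t} = {(v,t). v \<in> V \<and> t \<in> T \<and> \<sigma>0 v \<in> t}"
        using arg_cong[OF s(2), of fst] unfolding sg_def by (simp only: fst_conv)
      have f2: "{(u,v). u \<in> V \<and> v \<in> V \<and> \<sigma> u < \<sigma> v} = {(u,v). u \<in> V \<and> v \<in> V \<and> \<sigma>0 u < \<sigma>0 v}"
        using arg_cong[OF s(2), of snd] unfolding sg_def by (simp only: snd_conv)
      have h1: "\<forall>v\<in>V. \<forall>t\<in>T. (\<sigma>0 v \<in> t) = (\<sigma> v \<in> t)"
      proof (intro ballI)
        fix v t assume vt: "v \<in> V" "t \<in> T"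
        have "((v,t) \<in> {(v,t). v \<in> V \<and> t \<in> T \<and> \<sigma> v \<in> t}) = ((v,t) \<in> {(v,t). v \<in> V \<and> t \<in> T \<and> \<sigma>0 v \<in> t})"
          by (simp only: f1)
        then show "(\<sigma>0 v \<in> t) = (\<sigma> v \<in> t)" using vt by simp
      qed
      have h2: "\<forall>u\<in>V. \<forall>v\<in>V. (\<sigma>0 u < \<sigma>0 v) = (\<sigma> u < \<sigma> v)"
      proof (intro ballI)
        fix u v assume uv: "u \<in> V" "v \<in> V"
        have "((u,v) \<in> {(u,v). u \<in> V \<and> v \<in> V \<and> \<sigma> u < \<sigma> v}) = ((u,v) \<in> {(u,v). u \<in> V \<and> v \<in> V \<and> \<sigma>0 u < \<sigma>0 v})"
          by (simp only: f2)
        then show "(\<sigma>0 u < \<sigma>0 v) = (\<sigma> u < \<sigma> v)" using uv by simp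
      qed
      have "P \<sigma>" by (rule inv[OF s0(1) s(1) h1 h2 s0(2)])
      then show "\<sigma> \<in> {\<sigma> \<in> space ?M. P \<sigma>}" using s(1) by simp
    qed
  qed
  have fin2: "finite (sg ` {\<sigma> \<in> space ?M. P \<sigma>})"
  proof (rule finite_subset)
    show "sg ` {\<sigma> \<in> space ?M. P \<sigma>} \<subseteq> Pow (V \<times> T) \<times> Pow (V \<times> V)"
    proof (rule image_subsetI)
      fix \<sigma> :: "nat \<Rightarrow> real"
      have a: "{(v,t). v \<in> V \<and> t \<in> T \<and> \<sigma> v \<in> t} \<subseteq> V \<times> T"
      proof (rule subsetI)
        fix x assume "x \<in> {(v,t). v \<in> V \<and> t \<in> T \<and> \<sigma> v \<in> t}"
        then show "x \<in> V \<times> T" by (cases x) simp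
      qed
      have b: "{(u,v). u \<in> V \<and> v \<in> V \<and> \<sigma> u < \<sigma> v} \<subseteq> V \<times> V"
      proof (rule subsetI)
        fix x assume "x \<in> {(u,v). u \<in> V \<and> v \<in> V \<and> \<sigma> u < \<sigma> v}"
        then show "x \<in> V \<times> V" by (cases x) simp
      qed
      show "sg \<sigma> \<in> Pow (V \<times> T) \<times> Pow (V \<times> V)" unfolding sg_def using a b by simp
    qed
    show "finite (Pow (V \<times> T) \<times> Pow (V \<times> V))" using fin by simp
  qed
  have meas: "{\<sigma> \<in> space ?M. sg \<sigma> = S} \<in> sets ?M" if S: "S \<in> sg ` {\<sigma> \<in> space ?M. P \<sigma>}" for S
  proof -
    have S1: "fst S \<subseteq> V \<times> T" "snd S \<subseteq> V \<times> V" using S by (auto simp: sg_def)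
    obtain A B where AB: "S = (A, B)" by (cases S)
    have A: "A \<subseteq> V \<times> T" and B: "B \<subseteq> V \<times> V" using S1 AB by auto
    have "{\<sigma> \<in> space ?M. sg \<sigma> = S} = {\<sigma> \<in> space ?M. (\<forall>v\<in>V. \<forall>t\<in>T. (\<sigma> v \<in> t) = ((v,t) \<in> A))
          \<and> (\<forall>u\<in>V. \<forall>v\<in>V. (\<sigma> u < \<sigma> v) = ((u,v) \<in> B))}"
    proof (intro Collect_cong conj_cong refl)
      fix \<sigma>
      have e1: "({(v,t). v \<in> V \<and> t \<in> T \<and> \<sigma> v \<in> t} = A) = (\<forall>v\<in>V. \<forall>t\<in>T. (\<sigma> v \<in> t) = ((v,t) \<in> A))"
      proof
        assume h: "{(v,t). v \<in> V \<and> t \<in> T \<and> \<sigma> v \<in> t} = A"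
        show "\<forall>v\<in>V. \<forall>t\<in>T. (\<sigma> v \<in> t) = ((v,t) \<in> A)"
        proof (intro ballI)
          fix v t assume "v \<in> V" "t \<in> T"
          then show "(\<sigma> v \<in> t) = ((v,t) \<in> A)" unfolding h[symmetric] by simp
        qed
      next
        assume h: "\<forall>v\<in>V. \<forall>t\<in>T. (\<sigma> v \<in> t) = ((v,t) \<in> A)"
        show "{(v,t). v \<in> V \<and> t \<in> T \<and> \<sigma> v \<in> t} = A"
        proof (rule set_eqI)
          fix x :: "nat \<times> real set"
          obtain v t where x: "x = (v,t)" by (cases x)
          show "(x \<in> {(v,t). v \<in> V \<and> t \<in> T \<and> \<sigma> v \<in> t}) = (x \<in> A)"
            using h A unfolding x by blast
        qed
      qed
      have e2: "({(u,v). u \<in> V \<and> v \<in> V \<and> \<sigma> u < \<sigma> v} = B) = (\<forall>u\<in>V. \<forall>v\<in>V. (\<sigma> u < \<sigma> v) = ((u,v) \<in> B))"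
      proof
        assume h: "{(u,v). u \<in> V \<and> v \<in> V \<and> \<sigma> u < \<sigma> v} = B"
        show "\<forall>u\<in>V. \<forall>v\<in>V. (\<sigma> u < \<sigma> v) = ((u,v) \<in> B)"
        proof (intro ballI)
          fix u v assume "u \<in> V" "v \<in> V"
          then show "(\<sigma> u < \<sigma> v) = ((u,v) \<in> B)" unfolding h[symmetric] by simp
        qed
      next
        assume h: "\<forall>u\<in>V. \<forall>v\<in>V. (\<sigma> u < \<sigma> v) = ((u,v) \<in> B)"
        show "{(u,v). u \<in> V \<and> v \<in> V \<and> \<sigma> u < \<sigma> v} = B"
        proof (rule set_eqI)
          fix x :: "nat \<times> nat"
          obtain u v where x: "x = (u,v)" by (cases x)
          show "(x \<in> {(u,v). u \<in> V \<and> v \<in> V \<and> \<sigma> u < \<sigma> v}) = (x \<in> B)"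
            using h B unfolding x by blast
        qed
      qed
      show "(sg \<sigma> = S) = ((\<forall>v\<in>V. \<forall>t\<in>T. (\<sigma> v \<in> t) = ((v,t) \<in> A))
          \<and> (\<forall>u\<in>V. \<forall>v\<in>V. (\<sigma> u < \<sigma> v) = ((u,v) \<in> B)))"
        unfolding AB sg_def prod.inject e1 e2 ..
    qed
    also have "\<dots> \<in> sets ?M"
    proof -
      have p1: "Measurable.pred ?M (\<lambda>\<sigma>. \<sigma> v \<in> t)" if "v \<in> V" "t \<in> T" for v t
      proof -
        have "(\<lambda>\<sigma>. \<sigma> v) -` t \<inter> space ?M \<in> sets ?M"
          by (rule measurable_sets[OF comp_meas[OF that(1)] Tb[OF that(2)]])
        moreover have "{\<sigma> \<in> space ?M. \<sigma> v \<in> t} = (\<lambda>\<sigma>. \<sigma> v) -` t \<inter> space ?M" by blast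
        ultimately show ?thesis unfolding pred_def by simp
      qed
      have pc: "Measurable.pred ?M (\<lambda>_. K)" for K by (cases K) (simp_all add: pred_def)
      have p2: "Measurable.pred ?M (\<lambda>\<sigma>. \<sigma> u < \<sigma> v)" if "u \<in> V" "v \<in> V" for u v
        by (rule borel_measurable_pred_less[OF comp_meas[OF that(1)] comp_meas[OF that(2)]])
      have "Measurable.pred ?M (\<lambda>\<sigma>. (\<forall>v\<in>V. \<forall>t\<in>T. (\<sigma> v \<in> t) = ((v,t) \<in> A))
          \<and> (\<forall>u\<in>V. \<forall>v\<in>V. (\<sigma> u < \<sigma> v) = ((u,v) \<in> B)))"
        by (intro pred_intros_logic(3) pred_intros_finite(3) fin pred_intros_logic(6) p1 p2 pc)
      then show ?thesis by (simp add: pred_def)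
    qed
    finally show ?thesis .
  qed
  show ?thesis by (subst eq) (rule sets.finite_UN[OF fin2], rule meas)
qed


context prm begin

lemma alg1_ok_inv:
  assumes E: "E \<subseteq> Pow V"
    and H0: "\<And>v. v \<in> V \<Longrightarrow> (\<sigma> v \<in> {0..<1}) = (\<sigma>' v \<in> {0..<1})"
    and HD: "\<And>v j. v \<in> V \<Longrightarrow> j \<in> {1..r} \<Longrightarrow> (\<sigma> v \<in> DeltaI n r j) = (\<sigma>' v \<in> DeltaI n r j)"
    and Hd: "\<And>v j. v \<in> V \<Longrightarrow> j \<in> {1..<r} \<Longrightarrow> (\<sigma> v \<in> deltaI n r j) = (\<sigma>' v \<in> deltaI n r j)"
    and Hlt: "\<And>u v. u \<in> V \<Longrightarrow> v \<in> V \<Longrightarrow> (\<sigma> u < \<sigma> v) = (\<sigma>' u < \<sigma>' v)"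
    and ok: "alg1_ok n r V E \<sigma> c"
  shows "alg1_ok n r V E \<sigma>' c"
  unfolding alg1_ok_def
proof (intro conjI ballI allI impI)
  show "c v = 0" if "v \<notin> V" for v using alg1_okD(1)[OF ok that] .
  show "c v = 0" if "v \<in> V" "\<sigma>' v \<notin> {0..<1}" for v using alg1_okD(2)[OF ok that(1)] H0[OF that(1)] that(2) by blast
  show "c v = i" if "v \<in> V" "i \<in> {1..r}" "\<sigma>' v \<in> DeltaI n r i" for v i
    using alg1_okD(3)[OF ok that(1,2)] HD[OF that(1,2)] that(3) by blast
  fix v i assume v: "v \<in> V" and i: "i \<in> {1..<r}" and vd: "\<sigma>' v \<in> deltaI n r i"
  have vd': "\<sigma> v \<in> deltaI n r i" using Hd[OF v i] vd by blast
  have eq: "(\<forall>u\<in>e - {v}.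
                       (\<sigma> u \<in> (\<Union>j\<in>{1..r}. DeltaI n r j) \<or>
                        (\<sigma> u \<in> (\<Union>j\<in>{1..<r}. deltaI n r j) \<and> \<sigma> u < \<sigma> v))
                       \<and> c u = i) = (\<forall>u\<in>e - {v}.
                       (\<sigma>' u \<in> (\<Union>j\<in>{1..r}. DeltaI n r j) \<or>
                        (\<sigma>' u \<in> (\<Union>j\<in>{1..<r}. deltaI n r j) \<and> \<sigma>' u < \<sigma>' v))
                       \<and> c u = i)" if e: "e \<in> E" for e
  proof (intro ball_cong refl)
    fix u assume u: "u \<in> e - {v}"
    have uV: "u \<in> V" using u e E by auto
    have a: "(\<sigma> u \<in> (\<Union>j\<in>{1..r}. DeltaI n r j)) = (\<sigma>' u \<in> (\<Union>j\<in>{1..r}. DeltaI n r j))"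
      using HD[OF uV] by blast
    have b: "(\<sigma> u \<in> (\<Union>j\<in>{1..<r}. deltaI n r j)) = (\<sigma>' u \<in> (\<Union>j\<in>{1..<r}. deltaI n r j))"
      using Hd[OF uV] by blast
    show "((\<sigma> u \<in> (\<Union>j\<in>{1..r}. DeltaI n r j) \<or>
                        (\<sigma> u \<in> (\<Union>j\<in>{1..<r}. deltaI n r j) \<and> \<sigma> u < \<sigma> v))
                       \<and> c u = i) = ((\<sigma>' u \<in> (\<Union>j\<in>{1..r}. DeltaI n r j) \<or>
                        (\<sigma>' u \<in> (\<Union>j\<in>{1..<r}. deltaI n r j) \<and> \<sigma>' u < \<sigma>' v))
                       \<and> c u = i)"
      by (simp only: a b Hlt[OF uV v])
  qed
  have "(\<exists>e\<in>E. v \<in> e \<and>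
                    (\<forall>u\<in>e - {v}.
                       (\<sigma> u \<in> (\<Union>j\<in>{1..r}. DeltaI n r j) \<or>
                        (\<sigma> u \<in> (\<Union>j\<in>{1..<r}. deltaI n r j) \<and> \<sigma> u < \<sigma> v))
                       \<and> c u = i)) = (\<exists>e\<in>E. v \<in> e \<and>
                    (\<forall>u\<in>e - {v}.
                       (\<sigma>' u \<in> (\<Union>j\<in>{1..r}. DeltaI n r j) \<or>
                        (\<sigma>' u \<in> (\<Union>j\<in>{1..<r}. deltaI n r j) \<and> \<sigma>' u < \<sigma>' v))
                       \<and> c u = i))"
    using eq by (intro bex_cong conj_cong refl) auto
  then show "c v = (if (\<exists>e\<in>E. v \<in> e \<and>
                    (\<forall>u\<in>e - {v}.
                       (\<sigma>' u \<in> (\<Union>j\<in>{1..r}. DeltaI n r j) \<or>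
                        (\<sigma>' u \<in> (\<Union>j\<in>{1..<r}. deltaI n r j) \<and> \<sigma>' u < \<sigma>' v))
                       \<and> c u = i))
               then i + 1 else i)"
    using alg1_okD(4)[OF ok v i vd'] by argo
qed

lemma arg_min_on_inv:
  assumes S: "S \<subseteq> V" and Hlt: "\<And>u v. u \<in> V \<Longrightarrow> v \<in> V \<Longrightarrow> (\<sigma> u < \<sigma> v) = (\<sigma>' u < \<sigma>' v)"
  shows "arg_min_on \<sigma> S = arg_min_on \<sigma>' S"
proof -
  have "is_arg_min \<sigma> (\<lambda>x. x \<in> S) x = is_arg_min \<sigma>' (\<lambda>x. x \<in> S) x" for x
  proof (cases "x \<in> S")
    case True
    have "(\<exists>y. y \<in> S \<and> \<sigma> y < \<sigma> x) = (\<exists>y. y \<in> S \<and> \<sigma>' y < \<sigma>' x)"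
      using Hlt S True by blast
    then show ?thesis unfolding is_arg_min_def by simp
  qed (simp add: is_arg_min_def)
  then have "is_arg_min \<sigma> (\<lambda>x. x \<in> S) = is_arg_min \<sigma>' (\<lambda>x. x \<in> S)" by (rule ext)
  then show ?thesis unfolding arg_min_on_def arg_min_def by simp
qed

lemma arg_max_on_inv:
  assumes S: "S \<subseteq> V" and Hlt: "\<And>u v. u \<in> V \<Longrightarrow> v \<in> V \<Longrightarrow> (\<sigma> u < \<sigma> v) = (\<sigma>' u < \<sigma>' v)"
  shows "arg_max_on \<sigma> S = arg_max_on \<sigma>' S"
proof -
  have "is_arg_max \<sigma> (\<lambda>x. x \<in> S) x = is_arg_max \<sigma>' (\<lambda>x. x \<in> S) x" for x
  proof (cases "x \<in> S")
    case True
    have "(\<exists>y. y \<in> S \<and> \<sigma> y > \<sigma> x) = (\<exists>y. y \<in> S \<and> \<sigma>' y > \<sigma>' x)"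
      using Hlt S True by blast
    then show ?thesis unfolding is_arg_max_def by simp
  qed (simp add: is_arg_max_def)
  then have "is_arg_max \<sigma> (\<lambda>x. x \<in> S) = is_arg_max \<sigma>' (\<lambda>x. x \<in> S)" by (rule ext)
  then show ?thesis unfolding arg_max_on_def arg_max_def by simp
qed

end

definition Tset :: "nat \<Rightarrow> nat \<Rightarrow> real set set" where
  "Tset n r = insert {0..<1} (DeltaI n r ` {1..r} \<union> deltaI n r ` {1..<r})"

context prm begin

lemma chain_inv:
  assumes E: "E \<subseteq> Pow V" and C: "\<forall>j\<in>{1..k}. C j \<in> E" and k: "1 \<le> k" "k \<le> i" "i \<le> r"
    and H1: "\<forall>v\<in>V. \<forall>t\<in>Tset n r. (\<sigma> v \<in> t) = (\<sigma>' v \<in> t)"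
    and H2: "\<forall>u\<in>V. \<forall>v\<in>V. (\<sigma> u < \<sigma> v) = (\<sigma>' u < \<sigma>' v)"
    and oc: "ordered_chain n r V E k i C \<sigma>"
    and sp: "\<sigma> \<in> space (weight_space V)" "\<sigma>' \<in> space (weight_space V)"
  shows "ordered_chain n r V E k i C \<sigma>'"
proof -
  have H0: "\<And>v. v \<in> V \<Longrightarrow> (\<sigma> v \<in> {0..<1}) = (\<sigma>' v \<in> {0..<1})" using H1 by (auto simp: Tset_def)
  have HD: "\<And>v j. v \<in> V \<Longrightarrow> j \<in> {1..r} \<Longrightarrow> (\<sigma> v \<in> DeltaI n r j) = (\<sigma>' v \<in> DeltaI n r j)"
    using H1 by (auto simp: Tset_def)
  have Hd: "\<And>v j. v \<in> V \<Longrightarrow> j \<in> {1..<r} \<Longrightarrow> (\<sigma> v \<in> deltaI n r j) = (\<sigma>' v \<in> deltaI n r j)"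
    using H1 by (auto simp: Tset_def)
  have HDa: "\<And>v j. j \<in> {1..r} \<Longrightarrow> (\<sigma> v \<in> DeltaI n r j) = (\<sigma>' v \<in> DeltaI n r j)"
    using HD ws_undef[OF sp(1)] ws_undef[OF sp(2)] by metis
  have Hda: "\<And>v j. j \<in> {1..<r} \<Longrightarrow> (\<sigma> v \<in> deltaI n r j) = (\<sigma>' v \<in> deltaI n r j)"
    using Hd ws_undef[OF sp(1)] ws_undef[OF sp(2)] by metis
  have Hlt: "\<And>u v. u \<in> V \<Longrightarrow> v \<in> V \<Longrightarrow> (\<sigma> u < \<sigma> v) = (\<sigma>' u < \<sigma>' v)" using H2 by blast
  have Hlt': "\<And>u v. u \<in> V \<Longrightarrow> v \<in> V \<Longrightarrow> (\<sigma>' u < \<sigma>' v) = (\<sigma> u < \<sigma> v)" using H2 by blast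
  have okeq: "alg1_ok n r V E \<sigma> c = alg1_ok n r V E \<sigma>' c" for c
  proof
    show "alg1_ok n r V E \<sigma> c \<Longrightarrow> alg1_ok n r V E \<sigma>' c" by (rule alg1_ok_inv[OF E H0 HD Hd Hlt])
    show "alg1_ok n r V E \<sigma>' c \<Longrightarrow> alg1_ok n r V E \<sigma> c"
      by (rule alg1_ok_inv[OF E H0[symmetric] HD[symmetric] Hd[symmetric] Hlt'])
  qed
  have col: "alg1_color n r V E \<sigma>' = alg1_color n r V E \<sigma>"
  proof -
    have "alg1_ok n r V E \<sigma>' = alg1_ok n r V E \<sigma>" by (rule ext) (simp add: okeq)
    then show ?thesis unfolding alg1_color_def by simp
  qed
  have CV: "C j \<subseteq> V" if "j \<in> {1..k}" for j using C that E by blast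
  have fv: "first_v \<sigma>' (C j) = first_v \<sigma> (C j)" if "j \<in> {1..k}" for j
    unfolding first_v_def by (rule arg_min_on_inv[OF CV[OF that] Hlt'])
  have lv: "last_v \<sigma>' (C j) = last_v \<sigma> (C j)" if "j \<in> {1..k}" for j
    unfolding last_v_def by (rule arg_max_on_inv[OF CV[OF that] Hlt'])
  note oc = oc[unfolded ordered_chain_def]
  show ?thesis
    unfolding ordered_chain_def
  proof (intro conjI ballI)
    have j1: "1 \<in> {1..k}" using k by simp
    show "\<sigma>' (first_v \<sigma>' (C 1)) \<in> DeltaI n r (i - k + 1)"
      unfolding fv[OF j1] using HDa[of "i - k + 1"] conjunct1[OF oc] k by simp
  next
    fix j assume j: "j \<in> {1..<k}"
    have j1: "j \<in> {1..k}" "Suc j \<in> {1..k}" using j by auto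
    have ocj: "last_v \<sigma> (C j) = first_v \<sigma> (C (Suc j)) \<and>
        \<sigma> (last_v \<sigma> (C j)) \<in> deltaI n r (i - k + j) \<and>
        (\<forall>u\<in>C j - {last_v \<sigma> (C j)}. alg1_color n r V E \<sigma> u = i - k + j)"
      using conjunct1[OF conjunct2[OF oc]] j by blast
    show "last_v \<sigma>' (C j) = first_v \<sigma>' (C (Suc j))"
      unfolding lv[OF j1(1)] fv[OF j1(2)] using ocj by blast
    show "\<sigma>' (last_v \<sigma>' (C j)) \<in> deltaI n r (i - k + j)"
    proof -
      have "i - k + j \<in> {1..<r}" using j k by auto
      then show ?thesis unfolding lv[OF j1(1)] using ocj Hda by blast
    qed
    show "alg1_color n r V E \<sigma>' u = i - k + j" if "u \<in> C j - {last_v \<sigma>' (C j)}" for u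
      using that unfolding lv[OF j1(1)] col using ocj by blast
  next
    fix u assume "u \<in> C k"
    then show "alg1_color n r V E \<sigma>' u = i" unfolding col using conjunct2[OF conjunct2[OF oc]] by blast
  qed
qed

end


lemma UU_fin: "finite_measure UU" using UU_prob by (simp add: prob_space_def)

lemmas UU_eq = finite_measure.emeasure_eq_measure[OF UU_fin]

lemma ws_box:
  assumes V: "finite V" and A: "\<And>v. v \<in> V \<Longrightarrow> A v \<in> sets borel"
  shows "measure (weight_space V) (PiE V A) = (\<Prod>v\<in>V. measure UU (A v))"
proof -
  interpret P: product_prob_space "\<lambda>_. UU" V
    by (intro product_prob_space.intro product_sigma_finite.intro product_prob_space_axioms.intro
        prob_space_imp_sigma_finite UU_prob)
  interpret U: prob_space UU by (rule UU_prob)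
  have "emeasure (weight_space V) (PiE V A) = (\<Prod>v\<in>V. emeasure UU (A v))"
    unfolding weight_space_def using A by (intro P.emeasure_PiM V) simp
  also have "\<dots> = (\<Prod>v\<in>V. ennreal (measure UU (A v)))"
    by (simp add: UU_eq)
  also have "\<dots> = ennreal (\<Prod>v\<in>V. measure UU (A v))"
    by (rule prod_ennreal) simp
  finally show ?thesis unfolding measure_def by (simp add: prod_nonneg)
qed

lemma UU_le:
  fixes a b :: real
  assumes X: "X \<in> sets borel" "X \<subseteq> {a..b}" and ab: "a \<le> b"
  shows "measure UU X \<le> b - a"
proof -
  interpret U: prob_space UU by (rule UU_prob)
  have e1: "emeasure UU X = emeasure lborel ({0..<1} \<inter> X)"
    using X by (subst emeasure_uniform_measure) (simp_all add: divide_ennreal_def)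
  have e2: "emeasure lborel ({0..<1} \<inter> X) \<le> emeasure lborel {a..b}"
    using X by (intro emeasure_mono) auto
  have e3: "emeasure lborel {a..b} = ennreal (b - a)" using ab by simp
  have "ennreal (measure UU X) \<le> ennreal (b - a)" using e1 e2 e3 by (simp add: UU_eq)
  then show ?thesis using ab by (simp add: ennreal_le_iff)
qed

lemma UU_01: "0 \<le> measure UU (X::real set)" "measure UU X \<le> 1"
proof -
  interpret U: prob_space UU by (rule UU_prob)
  show "0 \<le> measure UU X" by simp
  show "measure UU X \<le> 1" by (rule U.prob_le_1)
qed

lemma UU_out: "measure UU (- {0::real..<1}) = 0"
proof -
  have "emeasure UU (- {0::real..<1}) = emeasure lborel ({0::real..<1} \<inter> - {0::real..<1}) / emeasure lborel {0::real..<1}"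
    by (subst emeasure_uniform_measure) auto
  also have "\<dots> = 0" by simp
  finally show ?thesis by (simp add: measure_def)
qed

lemma prod_subset_le:
  fixes f :: "'a \<Rightarrow> real"
  assumes "finite V" "W \<subseteq> V" "\<And>v. v \<in> V \<Longrightarrow> 0 \<le> f v \<and> f v \<le> 1"
  shows "prod f V \<le> prod f W"
proof -
  have "prod f V = prod f W * prod f (V - W)"
    using assms by (metis prod.subset_diff mult.commute)
  also have "\<dots> \<le> prod f W * 1"
    using assms by (intro mult_left_mono prod_le_1 prod_nonneg) auto
  finally show ?thesis by simp
qed

lemma tie_null:
  assumes V: "finite V" and u: "u \<in> V" and w: "w \<in> V" and uw: "u \<noteq> w"
  shows "{\<sigma> \<in> space (weight_space V). \<sigma> u = \<sigma> w} \<in> sets (weight_space V)"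
    and "measure (weight_space V) {\<sigma> \<in> space (weight_space V). \<sigma> u = \<sigma> w} = 0"
proof -
  let ?M = "weight_space V"
  let ?T = "{\<sigma> \<in> space ?M. \<sigma> u = \<sigma> w}"
  interpret W: prob_space ?M by (rule ws_prob)
  show Tm: "?T \<in> sets ?M"
    by (rule borel_measurable_eq[OF comp_meas[OF u] comp_meas[OF w]])
  have bnd: "measure ?M ?T \<le> 1 / real N" if N: "N \<ge> 1" for N :: nat
  proof -
    define G where "G q = PiE V (\<lambda>v. if v = u \<or> v = w then {real q / N ..< (real q + 1) / N} else UNIV)" for q :: nat
    define Ou where "Ou = PiE V (\<lambda>v. if v = u then - {0..<1} else (UNIV :: real set))"
    have sub: "?T \<subseteq> Ou \<union> (\<Union>q<N. G q)"
    proof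
      fix \<sigma> assume s: "\<sigma> \<in> ?T"
      have ext: "\<sigma> \<in> PiE V (\<lambda>_. UNIV)" using s by (simp add: space_ws)
      show "\<sigma> \<in> Ou \<union> (\<Union>q<N. G q)"
      proof (cases "\<sigma> u \<in> {0..<1}")
        case False
        then have "\<sigma> \<in> Ou" using ext by (auto simp: Ou_def PiE_def Pi_def)
        then show ?thesis by blast
      next
        case True
        define q where "q = nat \<lfloor>\<sigma> u * N\<rfloor>"
        have f0: "0 \<le> \<lfloor>\<sigma> u * N\<rfloor>" using True by auto
        have rq: "real q = of_int \<lfloor>\<sigma> u * N\<rfloor>" using f0 by (simp add: q_def)
        have lo: "real q \<le> \<sigma> u * N" using rq by linarith
        have hi: "\<sigma> u * N < real q + 1" using rq by linarith
        have qN: "q < N"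
        proof -
          have "\<sigma> u * real N < 1 * real N" using True N by (intro mult_strict_right_mono) auto
          then have "real q < real N" using lo by linarith
          then show ?thesis by simp
        qed
        have Npos: "0 < real N" using N by simp
        have in1: "\<sigma> u \<in> {real q / N ..< (real q + 1) / N}"
          using lo hi Npos by (simp add: field_simps)
        have "\<sigma> \<in> G q" using ext in1 s by (auto simp: G_def PiE_def Pi_def)
        then show ?thesis using qN by blast
      qed
    qed
    have Gm: "G q \<in> sets ?M" for q unfolding G_def weight_space_def by (rule sets_PiM_I_finite[OF V]) auto
    have Om: "Ou \<in> sets ?M" unfolding Ou_def weight_space_def by (rule sets_PiM_I_finite[OF V]) auto
    have "measure ?M ?T \<le> measure ?M (Ou \<union> (\<Union>q<N. G q))"
      using sub Gm Om by (intro W.finite_measure_mono) auto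
    also have "\<dots> \<le> measure ?M Ou + measure ?M (\<Union>q<N. G q)"
      using Gm Om by (intro measure_Un_le) auto
    also have "\<dots> \<le> measure ?M Ou + (\<Sum>q<N. measure ?M (G q))"
      using Gm by (intro add_left_mono measure_UNION_le) auto
    also have "measure ?M Ou = 0"
    proof -
      have "measure ?M Ou = (\<Prod>v\<in>V. measure UU (if v = u then - {0..<1} else UNIV))"
        unfolding Ou_def by (rule ws_box[OF V]) auto
      also have "\<dots> = 0" using u V UU_out by (intro prod_zero) auto
      finally show ?thesis .
    qed
    also have "measure ?M (G q) \<le> 1 / N * (1 / N)" for q
    proof -
      let ?f = "\<lambda>v. measure UU (if v = u \<or> v = w then {real q / N ..< (real q + 1) / N} else UNIV)"
      have f1: "?f v \<le> 1 / N" if "v = u \<or> v = w" for v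
      proof -
        have "?f v = measure UU {real q / N ..< (real q + 1) / N}" using that by simp
        also have "\<dots> \<le> (real q + 1) / N - real q / N"
          using N by (intro UU_le) (auto simp: divide_right_mono)
        also have "\<dots> = 1 / N" by (simp add: diff_divide_distrib[symmetric])
        finally show ?thesis .
      qed
      have "measure ?M (G q) = prod ?f V" unfolding G_def by (rule ws_box[OF V]) auto
      also have "\<dots> \<le> prod ?f {u, w}"
      proof (rule prod_subset_le[OF V])
        show "{u, w} \<subseteq> V" using u w by simp
        show "0 \<le> ?f v \<and> ?f v \<le> 1" for v using UU_01 by blast
      qed
      also have "\<dots> = ?f u * ?f w" using uw by simp
      also have "\<dots> \<le> 1 / N * (1 / N)"
      proof (rule mult_mono)
        show "?f u \<le> 1 / N" by (rule f1) simp
        show "?f w \<le> 1 / N" by (rule f1) simp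
        show "0 \<le> 1 / real N" by simp
        show "0 \<le> ?f w" by (rule UU_01)
      qed
      finally show ?thesis .
    qed
    then have "(\<Sum>q<N. measure ?M (G q)) \<le> (\<Sum>q<N. 1 / N * (1 / N))" by (intro sum_mono) auto
    also have "\<dots> = 1 / N" using N by simp
    finally show ?thesis by simp
  qed
  show "measure ?M ?T = 0"
  proof (rule ccontr)
    assume "measure ?M ?T \<noteq> 0"
    then have pos: "0 < measure ?M ?T" using measure_nonneg[of ?M ?T] by linarith
    obtain N :: nat where N: "1 / measure ?M ?T < N" using reals_Archimedean2 by blast
    have "0 < 1 / measure ?M ?T" using pos by simp
    then have "0 < real N" using N by linarith
    then have N1: "N \<ge> 1" by simp
    have "measure ?M ?T \<le> 1 / N" by (rule bnd[OF N1])
    then have "measure ?M ?T * N \<le> 1" using N1 by (simp add: field_simps)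
    moreover have "1 < measure ?M ?T * N" using N pos by (simp add: field_simps)
    ultimately show False by simp
  qed
qed


lemma amin:
  assumes "finite S" "S \<noteq> {}"
  shows "first_v \<sigma> S \<in> S" "\<And>u. u \<in> S \<Longrightarrow> \<sigma> (first_v \<sigma> S) \<le> \<sigma> u"
  unfolding first_v_def using arg_min_if_finite[OF assms] arg_min_least[OF assms] by auto

lemma amax:
  assumes "finite S" "S \<noteq> {}"
  shows "last_v \<sigma> S \<in> S" "\<And>u. u \<in> S \<Longrightarrow> \<sigma> u \<le> \<sigma> (last_v \<sigma> S)"
proof -
  have fi: "finite (\<sigma> ` S)" "\<sigma> ` S \<noteq> {}" using assms by auto
  obtain x where x1: "x \<in> S" and x2: "Max (\<sigma> ` S) = \<sigma> x" using Max_in[OF fi] by (rule imageE)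
  have x: "x \<in> S" "\<forall>y\<in>S. \<sigma> y \<le> \<sigma> x" using x1 x2 Max_ge[OF fi(1)] by auto
  have "arg_max \<sigma> (\<lambda>x. x \<in> S) \<in> S \<and> (\<forall>y\<in>S. \<sigma> y \<le> \<sigma> (arg_max \<sigma> (\<lambda>x. x \<in> S)))"
    by (rule arg_maxI[where P="\<lambda>x. x \<in> S" and f=\<sigma>, OF x(1)]) (use x in \<open>auto simp: not_less\<close>)
  then show "last_v \<sigma> S \<in> S" "\<And>u. u \<in> S \<Longrightarrow> \<sigma> u \<le> \<sigma> (last_v \<sigma> S)"
    unfolding last_v_def arg_max_on_def by auto
qed

locale chn = prm +
  fixes V :: "nat set" and E :: "nat set set" and k i :: nat and C :: "nat \<Rightarrow> nat set"
  assumes finV: "finite V" and Esub: "E \<subseteq> {e. e \<subseteq> V \<and> card e = n}"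
    and k1: "1 \<le> k" and ki: "k \<le> i" and ir: "i \<le> r" and CE: "\<forall>j\<in>{1..k}. C j \<in> E"
    and n2: "2 \<le> n"
begin

abbreviation "Ev \<equiv> {\<sigma> \<in> space (weight_space V). ordered_chain n r V E k i C \<sigma>}"
abbreviation "col \<equiv> alg1_color n r V E"
abbreviation "a \<equiv> i - k"

lemma EPow: "E \<subseteq> Pow V" using Esub by auto

lemma Cprops: assumes "j \<in> {1..k}"
  shows "C j \<subseteq> V" "finite (C j)" "card (C j) = n" "C j \<noteq> {}"
proof -
  have "C j \<in> E" using CE assms by blast
  then show cV: "C j \<subseteq> V" and cn: "card (C j) = n" using Esub by auto
  show "finite (C j)" using cV finV finite_subset by blast
  show "C j \<noteq> {}" using cn n2 by auto
qed

lemma lt_s: "x * s < y * s \<Longrightarrow> x < y" using s_pos by (simp add: mult_less_cancel_right)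

lemma evD:
  assumes "\<sigma> \<in> Ev"
  shows "\<sigma> (first_v \<sigma> (C 1)) \<in> DeltaI n r (a + 1)"
    and "\<And>j. j \<in> {1..<k} \<Longrightarrow> last_v \<sigma> (C j) = first_v \<sigma> (C (Suc j))"
    and "\<And>j. j \<in> {1..<k} \<Longrightarrow> \<sigma> (last_v \<sigma> (C j)) \<in> deltaI n r (a + j)"
    and "\<And>j u. j \<in> {1..<k} \<Longrightarrow> u \<in> C j - {last_v \<sigma> (C j)} \<Longrightarrow> col \<sigma> u = a + j"
    and "\<And>u. u \<in> C k \<Longrightarrow> col \<sigma> u = i"
proof -
  note A = assms[simplified, THEN conjunct2, unfolded ordered_chain_def]
  show "\<sigma> (first_v \<sigma> (C 1)) \<in> DeltaI n r (a + 1)" using conjunct1[OF A] by simp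
  show "last_v \<sigma> (C j) = first_v \<sigma> (C (Suc j))" if "j \<in> {1..<k}" for j
    using conjunct1[OF conjunct2[OF A]] that by blast
  show "\<sigma> (last_v \<sigma> (C j)) \<in> deltaI n r (a + j)" if "j \<in> {1..<k}" for j
  proof -
    have "\<sigma> (last_v \<sigma> (C j)) \<in> deltaI n r (i - k + j)" using conjunct1[OF conjunct2[OF A]] that by blast
    then show ?thesis by simp
  qed
  show "col \<sigma> u = a + j" if "j \<in> {1..<k}" "u \<in> C j - {last_v \<sigma> (C j)}" for j u
    using conjunct1[OF conjunct2[OF A]] that by blast
  show "col \<sigma> u = i" if "u \<in> C k" for u
    using conjunct2[OF conjunct2[OF A]] that by blast
qed

lemma wlo1: assumes "\<sigma> \<in> Ev" "u \<in> C 1" shows "real a * s \<le> \<sigma> u"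
proof -
  have "1 \<in> {1..k}" using k1 by simp
  note cp = Cprops[OF this]
  have "real a * s \<le> \<sigma> (first_v \<sigma> (C 1))"
    using evD(1)[OF assms(1)] ki by (simp add: DeltaI_eq)
  also have "\<dots> \<le> \<sigma> u" using amin(2)[OF cp(2,4) assms(2)] .
  finally show ?thesis .
qed

lemma wlo: assumes "\<sigma> \<in> Ev" "j \<in> {2..k}" "u \<in> C j" shows "\<sigma> (last_v \<sigma> (C (j - 1))) \<le> \<sigma> u"
proof -
  have j: "j \<in> {1..k}" "j - 1 \<in> {1..<k}" "Suc (j - 1) = j" using assms(2) by auto
  note cp = Cprops[OF j(1)]
  have "last_v \<sigma> (C (j - 1)) = first_v \<sigma> (C j)" using evD(2)[OF assms(1) j(2)] j(3) by simp
  then show ?thesis using amin(2)[OF cp(2,4) assms(3)] by simp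
qed

lemma whi: assumes "\<sigma> \<in> Ev" "j \<in> {1..k}" "u \<in> C j" shows "\<sigma> u \<le> \<sigma> (last_v \<sigma> (C j))"
  using amax(2)[OF Cprops(2,4)[OF assms(2)] assms(3)] .

lemma wdl: assumes "\<sigma> \<in> Ev" "j \<in> {1..<k}"
  shows "(real (a + j) - 1) * s + \<alpha> \<le> \<sigma> (last_v \<sigma> (C j))" "\<sigma> (last_v \<sigma> (C j)) < real (a + j) * s"
  using evD(3)[OF assms] by (auto simp: deltaI_eq)

lemma lastC: assumes "j \<in> {1..k}" shows "last_v \<sigma> (C j) \<in> C j"
  using amax(1)[OF Cprops(2,4)[OF assms]] .
lemma firstC: assumes "j \<in> {1..k}" shows "first_v \<sigma> (C j) \<in> C j"
  using amin(1)[OF Cprops(2,4)[OF assms]] .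

end

locale chn2 = chn +
  fixes \<sigma>0 :: "nat \<Rightarrow> real"
  assumes s0: "\<sigma>0 \<in> Ev"
begin

definition lk :: "nat \<Rightarrow> nat" where "lk j = last_v \<sigma>0 (C j)"

lemma lk_in: assumes "j \<in> {1..<k}" shows "lk j \<in> C j" "lk j \<in> C (Suc j)"
proof -
  have j: "j \<in> {1..k}" "Suc j \<in> {1..k}" using assms by auto
  show "lk j \<in> C j" unfolding lk_def by (rule lastC[OF j(1)])
  show "lk j \<in> C (Suc j)" unfolding lk_def evD(2)[OF s0 assms] by (rule firstC[OF j(2)])
qed

lemma lk_lo: assumes "j \<in> {1..<k}" shows "(real (a + j) - 1) * s + \<alpha> \<le> \<sigma>0 (lk j)"
  unfolding lk_def by (rule wdl(1)[OF s0 assms])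
lemma lk_hi: assumes "j \<in> {1..<k}" shows "\<sigma>0 (lk j) < real (a + j) * s"
  unfolding lk_def by (rule wdl(2)[OF s0 assms])

lemma lkC: assumes l: "l \<in> {1..<k}" and j: "j \<in> {1..k}" and x: "lk l \<in> C j"
  shows "j = l \<or> j = Suc l"
proof -
  have A: "l \<le> j" if jk: "j < k"
  proof -
    have jj: "j \<in> {1..<k}" using j jk by auto
    have "\<sigma>0 (lk l) \<le> \<sigma>0 (lk j)" unfolding lk_def[of j] by (rule whi[OF s0 j x])
    then have "(real (a + l) - 1) * s + \<alpha> < real (a + j) * s" using lk_lo[OF l] lk_hi[OF jj] by linarith
    then have "(real (a + l) - 1) * s < real (a + j) * s" using al_pos by linarith
    then have "real (a + l) - 1 < real (a + j)" by (rule lt_s)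
    then show ?thesis by linarith
  qed
  have B: "j \<le> Suc l" if j2: "2 \<le> j"
  proof -
    have jj: "j - 1 \<in> {1..<k}" "j \<in> {2..k}" using j j2 by auto
    have "\<sigma>0 (lk (j - 1)) \<le> \<sigma>0 (lk l)" unfolding lk_def[of "j - 1"] by (rule wlo[OF s0 jj(2) x])
    then have "(real (a + (j - 1)) - 1) * s + \<alpha> < real (a + l) * s" using lk_lo[OF jj(1)] lk_hi[OF l] by linarith
    then have "(real (a + (j - 1)) - 1) * s < real (a + l) * s" using al_pos by linarith
    then have "real (a + (j - 1)) - 1 < real (a + l)" by (rule lt_s)
    then show ?thesis using j2 by linarith
  qed
  show ?thesis
  proof (cases "j < k")
    case True
    then show ?thesis using A B l by (cases "2 \<le> j") auto
  next
    case False
    then show ?thesis using B l j by auto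
  qed
qed

lemma disj2: assumes j: "1 \<le> j" and jl: "j + 2 \<le> l" and lk: "l \<le> k" shows "C j \<inter> C l = {}"
proof (rule ccontr)
  assume "C j \<inter> C l \<noteq> {}"
  then obtain w where w: "w \<in> C j" "w \<in> C l" by blast
  have jj: "j \<in> {1..<k}" "j \<in> {1..k}" and ll: "l \<in> {2..k}" "l - 1 \<in> {1..<k}" using j jl lk by auto
  have "\<sigma>0 w \<le> \<sigma>0 (lk j)" unfolding lk_def by (rule whi[OF s0 jj(2) w(1)])
  moreover have "\<sigma>0 (lk (l - 1)) \<le> \<sigma>0 w" unfolding lk_def by (rule wlo[OF s0 ll(1) w(2)])
  ultimately have "(real (a + (l - 1)) - 1) * s + \<alpha> < real (a + j) * s"
    using lk_lo[OF ll(2)] lk_hi[OF jj(1)] by linarith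
  then have "(real (a + (l - 1)) - 1) * s < real (a + j) * s" using al_pos by linarith
  then have "real (a + (l - 1)) - 1 < real (a + j)" by (rule lt_s)
  then show False using jl lk by linarith
qed

lemma disj1: assumes j: "j \<in> {1..<k}" shows "C j \<inter> C (Suc j) = {lk j}"
proof
  show "{lk j} \<subseteq> C j \<inter> C (Suc j)" using lk_in[OF j] by blast
  show "C j \<inter> C (Suc j) \<subseteq> {lk j}"
  proof
    fix w assume w: "w \<in> C j \<inter> C (Suc j)"
    show "w \<in> {lk j}"
    proof (rule ccontr)
      assume "w \<notin> {lk j}"
      then have c1: "col \<sigma>0 w = a + j" using evD(4)[OF s0 j, of w] w unfolding lk_def by blast
      show False
      proof (cases "Suc j = k")
        case True
        then have "col \<sigma>0 w = i" using evD(5)[OF s0] w by blast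
        then show False using c1 True ki by simp
      next
        case False
        then have j1: "Suc j \<in> {1..<k}" "j \<in> {1..k}" using j by auto
        have "\<sigma>0 w \<le> \<sigma>0 (lk j)" unfolding lk_def by (rule whi[OF s0 j1(2)]) (use w in blast)
        also have "\<dots> < real (a + j) * s" by (rule lk_hi[OF j])
        also have "real (a + j) * s = (real (a + Suc j) - 1) * s" by simp
        also have "\<dots> < (real (a + Suc j) - 1) * s + \<alpha>" using al_pos by simp
        also have "\<dots> \<le> \<sigma>0 (lk (Suc j))" by (rule lk_lo[OF j1(1)])
        finally have "w \<noteq> last_v \<sigma>0 (C (Suc j))" unfolding lk_def by auto
        then have "col \<sigma>0 w = a + Suc j" using evD(4)[OF s0 j1(1), of w] w by blast
        then show False using c1 by simp
      qed
    qed
  qed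
qed

lemma lk_inj: "inj_on lk {1..<k}"
proof (rule inj_onI)
  fix l l' assume l: "l \<in> {1..<k}" and l': "l' \<in> {1..<k}" and eq: "lk l = lk l'"
  have "\<sigma>0 (lk l) \<in> deltaI n r (a + l)" "\<sigma>0 (lk l') \<in> deltaI n r (a + l')"
    unfolding lk_def using evD(3)[OF s0 l] evD(3)[OF s0 l'] by auto
  then have "a + l = a + l'" using delta_unique[of "a + l" "a + l'"] l l' eq by auto
  then show "l = l'" by simp
qed

lemma lk_eq: assumes "\<sigma> \<in> Ev" "j \<in> {1..<k}"
  shows "last_v \<sigma> (C j) = lk j" "first_v \<sigma> (C (Suc j)) = lk j"
proof -
  have j: "j \<in> {1..k}" "Suc j \<in> {1..k}" using assms(2) by auto
  have "last_v \<sigma> (C j) \<in> C j" by (rule lastC[OF j(1)])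
  moreover have "last_v \<sigma> (C j) \<in> C (Suc j)" unfolding evD(2)[OF assms] by (rule firstC[OF j(2)])
  ultimately have "last_v \<sigma> (C j) \<in> C j \<inter> C (Suc j)" by blast
  then show "last_v \<sigma> (C j) = lk j" using disj1[OF assms(2)] by blast
  then show "first_v \<sigma> (C (Suc j)) = lk j" using evD(2)[OF assms] by simp
qed

end


context chn2 begin

definition Lset :: "nat set" where "Lset = lk ` {1..<k}"
definition DD :: "nat \<Rightarrow> nat set" where "DD j = C j - Lset"

lemma CL: assumes j: "j \<in> {1..k}" shows "C j \<inter> Lset = lk ` {l \<in> {1..<k}. j = l \<or> j = Suc l}"
proof
  show "C j \<inter> Lset \<subseteq> lk ` {l \<in> {1..<k}. j = l \<or> j = Suc l}"
  proof
    fix x assume x: "x \<in> C j \<inter> Lset"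
    then obtain l where l: "l \<in> {1..<k}" "x = lk l" unfolding Lset_def by blast
    then have "j = l \<or> j = Suc l" using lkC[OF l(1) j] x by blast
    then show "x \<in> lk ` {l \<in> {1..<k}. j = l \<or> j = Suc l}" using l by blast
  qed
  show "lk ` {l \<in> {1..<k}. j = l \<or> j = Suc l} \<subseteq> C j \<inter> Lset"
  proof
    fix x assume "x \<in> lk ` {l \<in> {1..<k}. j = l \<or> j = Suc l}"
    then obtain l where l: "l \<in> {1..<k}" "j = l \<or> j = Suc l" "x = lk l" by blast
    have "x \<in> C j" using lk_in[OF l(1)] l(2,3) by blast
    moreover have "x \<in> Lset" using l unfolding Lset_def by blast
    ultimately show "x \<in> C j \<inter> Lset" by blast
  qed
qed

definition ind :: "bool \<Rightarrow> nat" where "ind b = (if b then 1 else 0)"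

lemma card_idx: assumes j: "j \<in> {1..k}"
  shows "card {l \<in> {1..<k}. j = l \<or> j = Suc l} = ind (j < k) + ind (2 \<le> j)"
proof (cases "j < k")
  case True
  show ?thesis
  proof (cases "2 \<le> j")
    case True2: True
    have "{l \<in> {1..<k}. j = l \<or> j = Suc l} = {j - 1, j}" using True True2 j by auto
    then show ?thesis using True True2 by (simp add: ind_def)
  next
    case False
    have "{l \<in> {1..<k}. j = l \<or> j = Suc l} = {j}" using True False j by auto
    then show ?thesis using True False by (simp add: ind_def)
  qed
next
  case False
  show ?thesis
  proof (cases "2 \<le> j")
    case True2: True
    have "{l \<in> {1..<k}. j = l \<or> j = Suc l} = {j - 1}" using False True2 j by auto
    then show ?thesis using False True2 by (simp add: ind_def)
  next
    case False2: False
    have "{l \<in> {1..<k}. j = l \<or> j = Suc l} = {}" using False False2 j by auto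
    then show ?thesis using False False2 by (simp add: ind_def)
  qed
qed

lemma cardD: assumes j: "j \<in> {1..k}"
  shows "real (card (DD j)) = real n - real (ind (j < k)) - real (ind (2 \<le> j))"
proof -
  note cp = Cprops[OF j]
  have "card (C j \<inter> Lset) = card {l \<in> {1..<k}. j = l \<or> j = Suc l}"
    unfolding CL[OF j] by (rule card_image) (rule inj_on_subset[OF lk_inj], blast)
  also have "\<dots> = ind (j < k) + ind (2 \<le> j)" by (rule card_idx[OF j])
  finally have c1: "card (C j \<inter> Lset) = ind (j < k) + ind (2 \<le> j)" .
  have "card (DD j) = card (C j) - card (C j \<inter> Lset)"
    unfolding DD_def by (rule card_Diff_subset_Int) (use cp in simp)
  moreover have "ind (j < k) + ind (2 \<le> j) \<le> n" using n2 by (simp add: ind_def)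
  ultimately show ?thesis using c1 cp(3) by simp
qed

lemma DD_sub: "DD j \<subseteq> C j" unfolding DD_def by blast

lemma DD_disj: assumes j: "j \<in> {1..k}" and l: "l \<in> {1..k}" and jl: "j \<noteq> l"
  shows "DD j \<inter> DD l = {}"
proof -
  have main: "DD x \<inter> DD y = {}" if x: "x \<in> {1..k}" and y: "y \<in> {1..k}" and xy: "x < y" for x y
  proof (cases "y = Suc x")
    case True
    have xx: "x \<in> {1..<k}" using x y xy by auto
    have "DD x \<inter> DD y \<subseteq> C x \<inter> C (Suc x) - Lset" unfolding DD_def True by blast
    also have "\<dots> = {lk x} - Lset" unfolding disj1[OF xx] ..
    also have "\<dots> = {}" using xx unfolding Lset_def by blast
    finally show ?thesis by blast
  next
    case False
    then have "C x \<inter> C y = {}" using x y xy by (intro disj2) auto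
    then show ?thesis unfolding DD_def by blast
  qed
  show ?thesis
  proof (cases "j < l")
    case True then show ?thesis using main[OF j l] by blast
  next
    case False then have "l < j" using jl by simp
    then show ?thesis using main[OF l j] by blast
  qed
qed

lemma DD_L: "DD j \<inter> Lset = {}" unfolding DD_def by blast

lemma sum_ind1: "(\<Sum>j\<in>{1..k}. real (ind (j < k))) = real k - 1"
proof -
  have "{1..k} = insert k {1..<k}" using k1 by auto
  then have "(\<Sum>j\<in>{1..k}. real (ind (j < k))) = real (ind (k < k)) + (\<Sum>j\<in>{1..<k}. real (ind (j < k)))"
    by simp
  also have "(\<Sum>j\<in>{1..<k}. real (ind (j < k))) = (\<Sum>j\<in>{1..<k}. 1)"
    by (rule sum.cong) (auto simp: ind_def)
  finally show ?thesis using k1 by (simp add: ind_def)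
qed

lemma sum_ind2: "(\<Sum>j\<in>{1..k}. real (ind (2 \<le> j))) = real k - 1"
proof -
  have "{1..k} = insert 1 {2..k}" using k1 by auto
  then have "(\<Sum>j\<in>{1..k}. real (ind (2 \<le> j))) = real (ind (2 \<le> (1::nat))) + (\<Sum>j\<in>{2..k}. real (ind (2 \<le> j)))"
    by simp
  also have "(\<Sum>j\<in>{2..k}. real (ind (2 \<le> j))) = (\<Sum>j\<in>{2..k}. 1)"
    by (rule sum.cong) (auto simp: ind_def)
  finally show ?thesis using k1 by (simp add: ind_def)
qed

lemma sum_card: "(\<Sum>j\<in>{1..k}. real (card (DD j))) = real n * real k - 2 * (real k - 1)"
proof -
  have "(\<Sum>j\<in>{1..k}. real (card (DD j))) = (\<Sum>j\<in>{1..k}. real n - real (ind (j < k)) - real (ind (2 \<le> j)))"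
    by (rule sum.cong) (auto simp: cardD)
  also have "\<dots> = real n * real k - (\<Sum>j\<in>{1..k}. real (ind (j < k))) - (\<Sum>j\<in>{1..k}. real (ind (2 \<le> j)))"
    by (simp add: sum_subtractf)
  also have "\<dots> = real n * real k - 2 * (real k - 1)" unfolding sum_ind1 sum_ind2 by simp
  finally show ?thesis .
qed

definition Tie :: "(nat \<Rightarrow> real) set" where
  "Tie = {\<sigma> \<in> space (weight_space V). \<exists>u\<in>C k. \<exists>w\<in>C k. u \<noteq> w \<and> \<sigma> u = \<sigma> w}"

lemma Tie_null: "Tie \<in> sets (weight_space V)" "measure (weight_space V) Tie = 0"
proof -
  let ?M = "weight_space V"
  let ?P = "{p. fst p \<in> C k \<and> snd p \<in> C k \<and> fst p \<noteq> snd p}"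
  have kk: "k \<in> {1..k}" using k1 by simp
  note cp = Cprops[OF kk]
  have fin: "finite ?P"
  proof (rule finite_subset)
    show "?P \<subseteq> C k \<times> C k" by auto
    show "finite (C k \<times> C k)" using cp by simp
  qed
  have eq: "Tie = (\<Union>p\<in>?P. {\<sigma> \<in> space ?M. \<sigma> (fst p) = \<sigma> (snd p)})"
  proof
    show "Tie \<subseteq> (\<Union>p\<in>?P. {\<sigma> \<in> space ?M. \<sigma> (fst p) = \<sigma> (snd p)})"
    proof
      fix \<sigma> assume "\<sigma> \<in> Tie"
      then obtain u w where h: "\<sigma> \<in> space ?M" "u \<in> C k" "w \<in> C k" "u \<noteq> w" "\<sigma> u = \<sigma> w"
        unfolding Tie_def by blast
      have "(u, w) \<in> ?P" using h by simp
      moreover have "\<sigma> \<in> {\<sigma> \<in> space ?M. \<sigma> (fst (u, w)) = \<sigma> (snd (u, w))}" using h by simp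
      ultimately show "\<sigma> \<in> (\<Union>p\<in>?P. {\<sigma> \<in> space ?M. \<sigma> (fst p) = \<sigma> (snd p)})" by blast
    qed
    show "(\<Union>p\<in>?P. {\<sigma> \<in> space ?M. \<sigma> (fst p) = \<sigma> (snd p)}) \<subseteq> Tie"
    proof
      fix \<sigma> assume "\<sigma> \<in> (\<Union>p\<in>?P. {\<sigma> \<in> space ?M. \<sigma> (fst p) = \<sigma> (snd p)})"
      then obtain p where p: "p \<in> ?P" "\<sigma> \<in> space ?M" "\<sigma> (fst p) = \<sigma> (snd p)" by blast
      then show "\<sigma> \<in> Tie" unfolding Tie_def by blast
    qed
  qed
  have ms: "{\<sigma> \<in> space ?M. \<sigma> (fst p) = \<sigma> (snd p)} \<in> sets ?M" if "p \<in> ?P" for p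
    using that cp(1) by (intro tie_null(1)[OF finV]) auto
  show "Tie \<in> sets ?M" unfolding eq by (rule sets.finite_UN[OF fin ms])
  have "measure ?M Tie \<le> (\<Sum>p\<in>?P. measure ?M {\<sigma> \<in> space ?M. \<sigma> (fst p) = \<sigma> (snd p)})"
    unfolding eq by (rule measure_UNION_le[OF fin ms])
  also have "\<dots> = 0"
  proof (rule sum.neutral, rule ballI)
    fix p assume "p \<in> ?P"
    then show "measure ?M {\<sigma> \<in> space ?M. \<sigma> (fst p) = \<sigma> (snd p)} = 0"
      using cp(1) by (intro tie_null(2)[OF finV]) auto
  qed
  finally show "measure ?M Tie = 0" using measure_nonneg[of ?M Tie] by linarith
qed

lemma top: assumes s: "\<sigma> \<in> Ev" and nt: "\<sigma> \<notin> Tie" and u: "u \<in> C k"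
  shows "\<sigma> u < (real i - 1) * s + \<alpha>"
proof -
  have kk: "k \<in> {1..k}" using k1 by simp
  note cp = Cprops[OF kk]
  define w where "w = last_v \<sigma> (C k)"
  have wC: "w \<in> C k" unfolding w_def by (rule lastC[OF kk])
  have wV: "w \<in> V" using wC cp by blast
  have sp: "\<sigma> \<in> space (weight_space V)" using s by blast
  have i1: "1 \<le> i" using k1 ki by simp
  have cw: "col \<sigma> w = i" using evD(5)[OF s wC] .
  have loc: "\<sigma> w \<in> {0..<1} \<and> (\<sigma> w \<in> DeltaI n r i \<or> (i < r \<and> \<sigma> w \<in> deltaI n r i)
          \<or> (2 \<le> i \<and> \<sigma> w \<in> deltaI n r (i - 1)))"
    by (rule color_loc[OF finV EPow wV cw i1])
  have notd: "\<not> (i < r \<and> \<sigma> w \<in> deltaI n r i)"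
  proof
    assume h: "i < r \<and> \<sigma> w \<in> deltaI n r i"
    have ir': "i \<in> {1..<r}" using h i1 by simp
    have "col \<sigma> w = i + 1"
    proof (rule color_bump[where \<sigma>=\<sigma>, OF finV EPow wV ir' conjunct2[OF h]])
      show "C k \<in> E" using CE kk by blast
      show "w \<in> C k" by (rule wC)
      fix u' assume u': "u' \<in> C k - {w}"
      have c': "col \<sigma> u' = i" using evD(5)[OF s] u' by blast
      have u'V: "u' \<in> V" using u' cp by blast
      have "\<sigma> u' \<in> {0..<1}" using color_loc[OF finV EPow u'V c' i1] by blast
      moreover have "\<sigma> u' \<le> \<sigma> w" unfolding w_def by (rule whi[OF s kk]) (use u' in blast)
      moreover have "\<sigma> u' \<noteq> \<sigma> w" using nt sp u' wC unfolding Tie_def by blast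
      ultimately show "col \<sigma> u' = i \<and> \<sigma> u' \<in> {0..<1} \<and> \<sigma> u' < \<sigma> w" using c' by simp
    qed
    then show False using cw by simp
  qed
  have "\<sigma> w < (real i - 1) * s + \<alpha>"
  proof -
    have "\<sigma> w \<in> DeltaI n r i \<or> (2 \<le> i \<and> \<sigma> w \<in> deltaI n r (i - 1))" using loc notd by blast
    then show ?thesis
    proof
      assume "\<sigma> w \<in> DeltaI n r i" then show ?thesis by (simp add: DeltaI_eq)
    next
      assume h: "2 \<le> i \<and> \<sigma> w \<in> deltaI n r (i - 1)"
      then have "\<sigma> w < real (i - 1) * s" unfolding deltaI_eq by (simp only: atLeastLessThan_iff)
      also have "real (i - 1) = real i - 1" using h by simp
      finally show ?thesis using al_pos by simp
    qed
  qed
  moreover have "\<sigma> u \<le> \<sigma> w" unfolding w_def by (rule whi[OF s kk u])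
  ultimately show ?thesis by simp
qed

end


context chn2 begin

definition cl :: "(nat \<Rightarrow> nat) \<Rightarrow> nat \<Rightarrow> real" where
  "cl m j = (real (a + j) - 1) * s + \<alpha> + real (m j) * \<beta> / real n"
definition cr :: "(nat \<Rightarrow> nat) \<Rightarrow> nat \<Rightarrow> real" where
  "cr m j = cl m j + \<beta> / real n"
definition lo :: "(nat \<Rightarrow> nat) \<Rightarrow> nat \<Rightarrow> real" where
  "lo m j = (if j = 1 then real a * s else cl m (j - 1))"
definition hi :: "(nat \<Rightarrow> nat) \<Rightarrow> nat \<Rightarrow> real" where
  "hi m j = (if j = k then (real i - 1) * s + \<alpha> else cr m j)"
definition AA :: "(nat \<Rightarrow> nat) \<Rightarrow> nat \<Rightarrow> real set" where
  "AA m v = {x. (\<forall>j\<in>{1..<k}. v = lk j \<longrightarrow> cl m j \<le> x \<and> x < cr m j) \<and>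
                (\<forall>j\<in>{1..k}. v \<in> C j \<longrightarrow> lo m j \<le> x \<and> x \<le> hi m j)}"
definition Cells :: "(nat \<Rightarrow> nat) set" where
  "Cells = PiE {1..<k} (\<lambda>_. {..<n})"
definition msel :: "(nat \<Rightarrow> real) \<Rightarrow> nat \<Rightarrow> nat" where
  "msel \<sigma> = (\<lambda>j\<in>{1..<k}. nat \<lfloor>(\<sigma> (lk j) - ((real (a + j) - 1) * s + \<alpha>)) * real n / \<beta>\<rfloor>)"

lemma npos: "0 < real n" using n2 by simp

lemma mfacts: assumes m: "m \<in> Cells" and j: "j \<in> {1..<k}"
  shows "0 \<le> real (m j) * \<beta> / real n" "real (m j) * \<beta> / real n + \<beta> / real n \<le> \<beta>"
proof -
  have mj: "m j < n" using m j unfolding Cells_def by auto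
  show "0 \<le> real (m j) * \<beta> / real n" using be_pos npos by simp
  have "real (m j) + 1 \<le> real n" using mj by linarith
  then have "(real (m j) + 1) * \<beta> \<le> real n * \<beta>" using be_pos by (intro mult_right_mono) auto
  then have "(real (m j) + 1) * \<beta> / real n \<le> \<beta>" using npos by (simp add: divide_le_eq mult.commute)
  then show "real (m j) * \<beta> / real n + \<beta> / real n \<le> \<beta>" by (simp add: add_divide_distrib distrib_right)
qed

lemma ell_bounds: assumes m: "m \<in> Cells" and j: "j \<in> {1..k}"
  shows "\<alpha> \<le> hi m j - lo m j" "hi m j - lo m j \<le> s + \<beta>"
proof -
  have ss: "s = \<alpha> + \<beta>" by (simp add: ss_def)
  have "\<alpha> \<le> hi m j - lo m j \<and> hi m j - lo m j \<le> s + \<beta>"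
  proof (cases "j = 1")
    case True
    show ?thesis
    proof (cases "k = 1")
      case True2: True
      have "real a = real i - 1" using True2 ki by simp
      then show ?thesis using True True2 be_pos unfolding hi_def lo_def ss by (simp add: algebra_simps)
    next
      case False
      have jj: "1 \<in> {1..<k}" using False k1 by simp
      note mf = mfacts[OF m jj]
      have "hi m j - lo m j = \<alpha> + (real (m 1) * \<beta> / real n + \<beta> / real n)"
        using True False unfolding hi_def lo_def cr_def cl_def by (simp add: algebra_simps)
      then show ?thesis using mf be_pos unfolding ss by simp
    qed
  next
    case False
    show ?thesis
    proof (cases "j = k")
      case True
      have jj: "j - 1 \<in> {1..<k}" using False True j by auto
      note mf = mfacts[OF m jj]
      have e: "real (a + (j - 1)) = real i - 1" using True False j ki by auto
      have "hi m j - lo m j = s - real (m (j - 1)) * \<beta> / real n"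
        using True False unfolding hi_def lo_def cr_def cl_def e by (simp add: algebra_simps)
      moreover have "0 \<le> \<beta> / real n" using be_pos npos by simp
      ultimately show ?thesis using mf be_pos unfolding ss by linarith
    next
      case False2: False
      have jj: "j - 1 \<in> {1..<k}" "j \<in> {1..<k}" using False False2 j by auto
      note mf1 = mfacts[OF m jj(1)] and mf2 = mfacts[OF m jj(2)]
      have e: "real (a + (j - 1)) = real (a + j) - 1" using False j by auto
      have "hi m j - lo m j = s + (real (m j) * \<beta> / real n + \<beta> / real n) - real (m (j - 1)) * \<beta> / real n"
        using False False2 unfolding hi_def lo_def cr_def cl_def e by (simp add: algebra_simps)
      moreover have "0 \<le> \<beta> / real n" using be_pos npos by simp
      ultimately show ?thesis using mf1 mf2 be_pos unfolding ss by linarith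
    qed
  qed
  then show "\<alpha> \<le> hi m j - lo m j" "hi m j - lo m j \<le> s + \<beta>" by auto
qed

lemma ell_sum: assumes m: "m \<in> Cells"
  shows "(\<Sum>j\<in>{1..k}. hi m j - lo m j) = real k * \<alpha> + (real k - 1) * \<beta> + (real k - 1) * \<beta> / real n"
proof -
  have s1: "(\<Sum>j\<in>{1..k}. hi m j) = ((real i - 1) * s + \<alpha>) + (\<Sum>j\<in>{1..<k}. cr m j)"
  proof -
    have "{1..k} = insert k {1..<k}" using k1 by auto
    then have "(\<Sum>j\<in>{1..k}. hi m j) = hi m k + (\<Sum>j\<in>{1..<k}. hi m j)" by simp
    also have "(\<Sum>j\<in>{1..<k}. hi m j) = (\<Sum>j\<in>{1..<k}. cr m j)"
      by (rule sum.cong) (auto simp: hi_def)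
    finally show ?thesis by (simp add: hi_def)
  qed
  have s2: "(\<Sum>j\<in>{1..k}. lo m j) = real a * s + (\<Sum>j\<in>{1..<k}. cl m j)"
  proof -
    have "{1..k} = insert 1 {2..k}" using k1 by auto
    then have "(\<Sum>j\<in>{1..k}. lo m j) = lo m 1 + (\<Sum>j\<in>{2..k}. lo m j)" by simp
    also have "(\<Sum>j\<in>{2..k}. lo m j) = (\<Sum>j\<in>{2..k}. cl m (j - 1))"
      by (rule sum.cong) (auto simp: lo_def)
    also have "\<dots> = (\<Sum>j\<in>Suc ` {1..<k}. cl m (j - 1))"
    proof -
      have "{2..k} = Suc ` {1..<k}" using k1 by (auto simp: image_iff)
      then show ?thesis by simp
    qed
    also have "\<dots> = (\<Sum>j\<in>{1..<k}. cl m j)" by (subst sum.reindex) auto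
    finally show ?thesis by (simp add: lo_def)
  qed
  have s3: "(\<Sum>j\<in>{1..<k}. cr m j) = (\<Sum>j\<in>{1..<k}. cl m j) + (real k - 1) * (\<beta> / real n)"
    unfolding cr_def sum.distrib using k1 by simp
  have "(\<Sum>j\<in>{1..k}. hi m j - lo m j) = (\<Sum>j\<in>{1..k}. hi m j) - (\<Sum>j\<in>{1..k}. lo m j)"
    by (rule sum_subtractf)
  also have "\<dots> = (real i - 1) * s + \<alpha> - real a * s + (real k - 1) * (\<beta> / real n)"
    unfolding s1 s2 s3 by simp
  also have "real a = real i - real k" using ki by simp
  finally show ?thesis by (simp add: ss_def algebra_simps)
qed

end


context chn2 begin

lemma cover: assumes s: "\<sigma> \<in> Ev" and nt: "\<sigma> \<notin> Tie"
  shows "msel \<sigma> \<in> Cells" "\<sigma> \<in> PiE V (AA (msel \<sigma>))"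
proof -
  have sp: "\<sigma> \<in> space (weight_space V)" using s by blast
  have key: "msel \<sigma> j < n \<and> cl (msel \<sigma>) j \<le> \<sigma> (lk j) \<and> \<sigma> (lk j) < cr (msel \<sigma>) j" if j: "j \<in> {1..<k}" for j
  proof -
    define L where "L = (real (a + j) - 1) * s + \<alpha>"
    have t1: "L \<le> \<sigma> (lk j)" using wdl(1)[OF s j] lk_eq(1)[OF s j] unfolding L_def by simp
    have "\<sigma> (lk j) < real (a + j) * s" using wdl(2)[OF s j] lk_eq(1)[OF s j] by simp
    also have "real (a + j) * s = L + \<beta>" unfolding L_def by (simp add: ss_def algebra_simps)
    finally have t2: "\<sigma> (lk j) < L + \<beta>" .
    define z where "z = (\<sigma> (lk j) - L) * real n / \<beta>"
    have z0: "0 \<le> z" unfolding z_def using t1 be_pos npos by simp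
    have zn: "z < real n"
    proof -
      have "(\<sigma> (lk j) - L) * real n < \<beta> * real n" using t2 npos by (intro mult_strict_right_mono) auto
      then show ?thesis unfolding z_def using be_pos by (simp add: divide_less_eq mult.commute)
    qed
    define q where "q = nat \<lfloor>z\<rfloor>"
    have rq: "real q = of_int \<lfloor>z\<rfloor>" using z0 by (simp add: q_def)
    have q1: "real q \<le> z" using rq by linarith
    have q2: "z < real q + 1" using rq by linarith
    have qn: "q < n" using q1 zn by linarith
    have ms: "msel \<sigma> j = q" unfolding msel_def q_def z_def L_def using j by simp
    have "real q * \<beta> / real n \<le> \<sigma> (lk j) - L"
    proof -
      have "real q * \<beta> \<le> z * \<beta>" using q1 be_pos by (intro mult_right_mono) auto
      also have "z * \<beta> = (\<sigma> (lk j) - L) * real n" unfolding z_def using be_pos by simp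
      finally show ?thesis using npos by (simp add: divide_le_eq)
    qed
    then have c1: "cl (msel \<sigma>) j \<le> \<sigma> (lk j)" unfolding cl_def ms L_def by simp
    have "\<sigma> (lk j) - L < (real q + 1) * \<beta> / real n"
    proof -
      have "(\<sigma> (lk j) - L) * real n = z * \<beta>" unfolding z_def using be_pos by simp
      also have "z * \<beta> < (real q + 1) * \<beta>" using q2 be_pos by (intro mult_strict_right_mono) auto
      finally show ?thesis using npos by (simp add: less_divide_eq)
    qed
    then have c2: "\<sigma> (lk j) < cr (msel \<sigma>) j" unfolding cr_def cl_def ms L_def
      by (simp add: add_divide_distrib distrib_right)
    show ?thesis using qn c1 c2 ms by simp
  qed
  show "msel \<sigma> \<in> Cells" unfolding Cells_def
  proof (rule PiE_I)
    show "msel \<sigma> x \<in> {..<n}" if "x \<in> {1..<k}" for x using key[OF that] by simp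
    show "msel \<sigma> x = undefined" if "x \<notin> {1..<k}" for x using that unfolding msel_def restrict_def by (simp only: if_False)
  qed
  show "\<sigma> \<in> PiE V (AA (msel \<sigma>))"
  proof (rule PiE_I)
    show "\<sigma> x = undefined" if "x \<notin> V" for x using ws_undef[OF sp that] .
    fix v assume v: "v \<in> V"
    let ?m = "msel \<sigma>"
    have A1: "\<forall>j\<in>{1..<k}. v = lk j \<longrightarrow> cl ?m j \<le> \<sigma> v \<and> \<sigma> v < cr ?m j"
      using key by auto
    have A2: "\<forall>j\<in>{1..k}. v \<in> C j \<longrightarrow> lo ?m j \<le> \<sigma> v \<and> \<sigma> v \<le> hi ?m j"
    proof (intro ballI impI conjI)
      fix j assume j: "j \<in> {1..k}" and vj: "v \<in> C j"
      show "lo ?m j \<le> \<sigma> v"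
      proof (cases "j = 1")
        case True
        then show ?thesis using wlo1[OF s] vj by (simp add: lo_def)
      next
        case False
        then have j2: "j \<in> {2..k}" "j - 1 \<in> {1..<k}" using j by auto
        have "cl ?m (j - 1) \<le> \<sigma> (lk (j - 1))" using key[OF j2(2)] by simp
        also have "\<dots> = \<sigma> (last_v \<sigma> (C (j - 1)))" using lk_eq(1)[OF s j2(2)] by simp
        also have "\<dots> \<le> \<sigma> v" by (rule wlo[OF s j2(1) vj])
        finally show ?thesis using False by (simp add: lo_def)
      qed
      show "\<sigma> v \<le> hi ?m j"
      proof (cases "j = k")
        case True
        then show ?thesis using top[OF s nt] vj by (simp add: hi_def less_imp_le)
      next
        case False
        then have jj: "j \<in> {1..<k}" using j by auto
        have "\<sigma> v \<le> \<sigma> (last_v \<sigma> (C j))" by (rule whi[OF s j vj])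
        also have "\<dots> = \<sigma> (lk j)" using lk_eq(1)[OF s jj] by simp
        also have "\<dots> < cr ?m j" using key[OF jj] by simp
        finally show ?thesis using False by (simp add: hi_def)
      qed
    qed
    show "\<sigma> v \<in> AA ?m v" unfolding AA_def using A1 A2 by simp
  qed
qed

lemma AA_borel: "AA m v \<in> sets borel"
proof -
  have "Measurable.pred borel (\<lambda>x. (\<forall>j\<in>{1..<k}. v = lk j \<longrightarrow> cl m j \<le> x \<and> x < cr m j) \<and>
                (\<forall>j\<in>{1..k}. v \<in> C j \<longrightarrow> lo m j \<le> x \<and> x \<le> hi m j))"
    by measurable
  then show ?thesis unfolding AA_def pred_def by simp
qed

end


context chn begin

lemma Ev_sets: "Ev \<in> sets (weight_space V)"
proof (rule meas_inv[OF finV])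
  show "finite (Tset n r)" unfolding Tset_def by simp
  show "t \<in> sets borel" if "t \<in> Tset n r" for t
    using that unfolding Tset_def DeltaI_eq deltaI_eq by auto
  fix \<sigma> \<sigma>' assume sp: "\<sigma> \<in> space (weight_space V)" "\<sigma>' \<in> space (weight_space V)"
    and H1: "\<forall>v\<in>V. \<forall>t\<in>Tset n r. (\<sigma> v \<in> t) = (\<sigma>' v \<in> t)"
    and H2: "\<forall>u\<in>V. \<forall>v\<in>V. (\<sigma> u < \<sigma> v) = (\<sigma>' u < \<sigma>' v)"
    and oc: "ordered_chain n r V E k i C \<sigma>"
  show "ordered_chain n r V E k i C \<sigma>'"
    by (rule chain_inv[OF EPow CE k1 ki ir H1 H2 oc sp])
qed

end

context chn2 begin

lemma box_bound: assumes m: "m \<in> Cells"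
  shows "measure (weight_space V) (PiE V (AA m)) \<le> (\<beta> / real n) ^ (k - 1) * (\<Prod>j\<in>{1..k}. (hi m j - lo m j) ^ card (DD j))"
proof -
  define f where "f v = measure UU (AA m v)" for v
  have f01: "0 \<le> f v" "f v \<le> 1" for v unfolding f_def by (rule UU_01)+
  have meq: "measure (weight_space V) (PiE V (AA m)) = prod f V"
    unfolding f_def by (rule ws_box[OF finV AA_borel])
  define U where "U = (\<Union>j\<in>{1..k}. DD j)"
  have LV: "Lset \<subseteq> V" unfolding Lset_def using lk_in Cprops(1) by fastforce
  have UV: "U \<subseteq> V" unfolding U_def using DD_sub Cprops(1) by fastforce
  have finL: "finite Lset" unfolding Lset_def by simp
  have finD: "finite (DD j)" if "j \<in> {1..k}" for j using Cprops(2)[OF that] DD_sub finite_subset by blast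
  have finU: "finite U" unfolding U_def using finD by auto
  have LU: "Lset \<inter> U = {}" unfolding U_def using DD_L by blast
  have "prod f V \<le> prod f (Lset \<union> U)"
    by (rule prod_subset_le[OF finV]) (use LV UV f01 in auto)
  also have "\<dots> = prod f Lset * prod f U" by (rule prod.union_disjoint[OF finL finU LU])
  finally have c1: "prod f V \<le> prod f Lset * prod f U" .
  have c2: "prod f Lset \<le> (\<beta> / real n) ^ (k - 1)"
  proof -
    have "prod f Lset = (\<Prod>j\<in>{1..<k}. f (lk j))"
      unfolding Lset_def by (subst prod.reindex[OF lk_inj]) simp
    also have "\<dots> \<le> (\<Prod>j\<in>{1..<k}. \<beta> / real n)"
    proof (rule prod_mono, rule conjI)
      fix j assume j: "j \<in> {1..<k}"
      show "0 \<le> f (lk j)" by (rule f01)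
      have "AA m (lk j) \<subseteq> {cl m j .. cr m j}" unfolding AA_def using j by auto
      then have "f (lk j) \<le> cr m j - cl m j"
        unfolding f_def using be_pos npos by (intro UU_le AA_borel) (auto simp: cr_def)
      then show "f (lk j) \<le> \<beta> / real n" by (simp add: cr_def)
    qed
    also have "\<dots> = (\<beta> / real n) ^ (k - 1)" by simp
    finally show ?thesis .
  qed
  have c3: "prod f U \<le> (\<Prod>j\<in>{1..k}. (hi m j - lo m j) ^ card (DD j))"
  proof -
    have "prod f U = (\<Prod>j\<in>{1..k}. prod f (DD j))"
      unfolding U_def by (rule prod.UNION_disjoint) (use finD DD_disj in auto)
    also have "\<dots> \<le> (\<Prod>j\<in>{1..k}. (hi m j - lo m j) ^ card (DD j))"
    proof (rule prod_mono, rule conjI)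
      fix j assume j: "j \<in> {1..k}"
      show "0 \<le> prod f (DD j)" using f01 by (simp add: prod_nonneg)
      have "prod f (DD j) \<le> (\<Prod>v\<in>DD j. hi m j - lo m j)"
      proof (rule prod_mono, rule conjI)
        fix v assume v: "v \<in> DD j"
        show "0 \<le> f v" by (rule f01)
        have vC: "v \<in> C j" using v DD_sub by blast
        have "AA m v \<subseteq> {lo m j .. hi m j}"
        proof
          fix x assume "x \<in> AA m v"
          then have "\<forall>j\<in>{1..k}. v \<in> C j \<longrightarrow> lo m j \<le> x \<and> x \<le> hi m j" unfolding AA_def by blast
          then show "x \<in> {lo m j .. hi m j}" using j vC by simp
        qed
        then show "f v \<le> hi m j - lo m j"
          unfolding f_def using ell_bounds(1)[OF m j] al_pos by (intro UU_le AA_borel) auto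
      qed
      then show "prod f (DD j) \<le> (hi m j - lo m j) ^ card (DD j)" by simp
    qed
    finally show ?thesis .
  qed
  have "prod f Lset * prod f U \<le> (\<beta> / real n) ^ (k - 1) * (\<Prod>j\<in>{1..k}. (hi m j - lo m j) ^ card (DD j))"
    by (rule mult_mono[OF c2 c3]) (use f01 be_pos npos in \<open>simp_all add: prod_nonneg\<close>)
  then show ?thesis unfolding meq using c1 by linarith
qed

end


context chn2 begin

abbreviation "XX \<equiv> (real n - 2) * (real r * (real k * \<alpha> + (real k - 1) * \<beta> + (real k - 1) * \<beta> / real n) - real k)
   + 4 * (real r * \<beta>)"

lemma prod_ell: assumes m: "m \<in> Cells"
  shows "(\<Prod>j\<in>{1..k}. (hi m j - lo m j) ^ card (DD j)) \<le> (1 / real r) ^ ((n - 2) * k + 2) * exp XX"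
proof -
  define l where "l j = hi m j - lo m j" for j
  define y where "y j = real r * l j - 1" for j
  define d where "d j = card (DD j)" for j
  have rpos: "0 < real r" using r2 by simp
  have ra: "real r * \<alpha> = 1 - pp n r" using rpos by (simp add: al_def)
  have l0: "0 \<le> l j" if "j \<in> {1..k}" for j using ell_bounds(1)[OF m that] al_pos unfolding l_def by linarith
  have y1: "0 \<le> 1 + y j" if "j \<in> {1..k}" for j unfolding y_def using l0[OF that] rpos by simp
  have yu: "y j \<le> 2 * (real r * \<beta>)" if "j \<in> {1..k}" for j
  proof -
    have "real r * l j \<le> real r * (s + \<beta>)" using ell_bounds(2)[OF m that] rpos unfolding l_def by simp
    also have "real r * (s + \<beta>) = real r * \<alpha> + 2 * (real r * \<beta>)" by (simp add: ss_def algebra_simps)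
    finally show ?thesis unfolding y_def ra using p0 by linarith
  qed
  have each: "l j ^ d j \<le> (1 / real r) ^ d j * exp (real (d j) * y j)" if j: "j \<in> {1..k}" for j
  proof -
    have le: "l j = (1 / real r) * (1 + y j)" unfolding y_def using rpos by simp
    have "l j ^ d j = (1 / real r) ^ d j * (1 + y j) ^ d j" unfolding le by (rule power_mult_distrib)
    also have "(1 + y j) ^ d j \<le> exp (y j) ^ d j"
      by (rule power_mono[OF exp_ge_add_one_self y1[OF j]])
    also have "exp (y j) ^ d j = exp (real (d j) * y j)" by (simp add: exp_of_nat_mult)
    finally show ?thesis using rpos by (simp add: mult_left_mono)
  qed
  have "(\<Prod>j\<in>{1..k}. l j ^ d j) \<le> (\<Prod>j\<in>{1..k}. (1 / real r) ^ d j * exp (real (d j) * y j))"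
    by (rule prod_mono) (use each l0 in simp)
  also have "\<dots> = (\<Prod>j\<in>{1..k}. (1 / real r) ^ d j) * (\<Prod>j\<in>{1..k}. exp (real (d j) * y j))"
    by (rule prod.distrib)
  also have "(\<Prod>j\<in>{1..k}. (1 / real r) ^ d j) = (1 / real r) ^ (\<Sum>j\<in>{1..k}. d j)"
    by (simp add: power_sum)
  also have "(\<Sum>j\<in>{1..k}. d j) = (n - 2) * k + 2"
  proof -
    have "real (\<Sum>j\<in>{1..k}. d j) = real n * real k - 2 * (real k - 1)"
      unfolding d_def of_nat_sum by (rule sum_card)
    also have "\<dots> = real ((n - 2) * k + 2)" using n2 by (simp add: of_nat_diff algebra_simps)
    finally show ?thesis by (simp only: of_nat_eq_iff)
  qed
  also have "(\<Prod>j\<in>{1..k}. exp (real (d j) * y j)) = exp (\<Sum>j\<in>{1..k}. real (d j) * y j)"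
    by (simp add: exp_sum)
  finally have A: "(\<Prod>j\<in>{1..k}. l j ^ d j) \<le> (1 / real r) ^ ((n - 2) * k + 2) * exp (\<Sum>j\<in>{1..k}. real (d j) * y j)" .
  have SB: "(\<Sum>j\<in>{1..k}. real (d j) * y j) \<le> XX"
  proof -
    define e where "e j = real (d j) - (real n - 2)" for j
    have e0: "0 \<le> e j" if "j \<in> {1..k}" for j
      unfolding e_def d_def using cardD[OF that] by (simp add: ind_def)
    have se: "(\<Sum>j\<in>{1..k}. e j) = 2"
    proof -
      have "(\<Sum>j\<in>{1..k}. e j) = (\<Sum>j\<in>{1..k}. real (d j)) - real k * (real n - 2)"
        unfolding e_def by (simp add: sum_subtractf)
      also have "(\<Sum>j\<in>{1..k}. real (d j)) = real n * real k - 2 * (real k - 1)"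
        unfolding d_def by (rule sum_card)
      finally show ?thesis by (simp add: algebra_simps)
    qed
    have "(\<Sum>j\<in>{1..k}. real (d j) * y j) = (\<Sum>j\<in>{1..k}. (real n - 2) * y j + e j * y j)"
      by (rule sum.cong) (auto simp: e_def algebra_simps)
    also have "\<dots> = (real n - 2) * (\<Sum>j\<in>{1..k}. y j) + (\<Sum>j\<in>{1..k}. e j * y j)"
      by (simp add: sum.distrib sum_distrib_left)
    also have "(\<Sum>j\<in>{1..k}. e j * y j) \<le> (\<Sum>j\<in>{1..k}. e j * (2 * (real r * \<beta>)))"
      by (rule sum_mono) (use e0 yu in \<open>simp add: mult_left_mono\<close>)
    also have "\<dots> = (\<Sum>j\<in>{1..k}. e j) * (2 * (real r * \<beta>))" by (rule sum_distrib_right[symmetric])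
    also have "\<dots> = 4 * (real r * \<beta>)" unfolding se by simp
    also have "(\<Sum>j\<in>{1..k}. y j) = real r * (\<Sum>j\<in>{1..k}. l j) - real k"
      unfolding y_def by (simp add: sum_subtractf sum_distrib_left)
    also have "(\<Sum>j\<in>{1..k}. l j) = real k * \<alpha> + (real k - 1) * \<beta> + (real k - 1) * \<beta> / real n"
      unfolding l_def by (rule ell_sum[OF m])
    finally show ?thesis by simp
  qed
  have "(1 / real r) ^ ((n - 2) * k + 2) * exp (\<Sum>j\<in>{1..k}. real (d j) * y j) \<le> (1 / real r) ^ ((n - 2) * k + 2) * exp XX"
    using SB rpos by (intro mult_left_mono) auto
  then show ?thesis using A unfolding l_def d_def by linarith
qed

lemma Ev_bound:
  "measure (weight_space V) Ev \<le> (real r * \<beta>) ^ (k - 1) / real r ^ ((n - 1) * k + 1) * exp XX"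
proof -
  let ?M = "weight_space V"
  interpret W: prob_space ?M by (rule ws_prob)
  define B where "B = (\<beta> / real n) ^ (k - 1) * ((1 / real r) ^ ((n - 2) * k + 2) * exp XX)"
  have bm: "measure ?M (PiE V (AA m)) \<le> B" if m: "m \<in> Cells" for m
  proof -
    have "measure ?M (PiE V (AA m)) \<le> (\<beta> / real n) ^ (k - 1) * (\<Prod>j\<in>{1..k}. (hi m j - lo m j) ^ card (DD j))"
      by (rule box_bound[OF m])
    also have "\<dots> \<le> B" unfolding B_def using be_pos npos
      by (intro mult_left_mono prod_ell[OF m]) auto
    finally show ?thesis .
  qed
  have finC: "finite Cells" unfolding Cells_def by (simp add: finite_PiE)
  have mB: "PiE V (AA m) \<in> sets ?M" for m
    unfolding weight_space_def by (rule sets_PiM_I_finite[OF finV]) (simp add: AA_borel)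
  have sub: "Ev \<subseteq> Tie \<union> (\<Union>m\<in>Cells. PiE V (AA m))"
  proof
    fix \<sigma> assume s: "\<sigma> \<in> Ev"
    show "\<sigma> \<in> Tie \<union> (\<Union>m\<in>Cells. PiE V (AA m))"
    proof (cases "\<sigma> \<in> Tie")
      case False
      then show ?thesis using cover[OF s False] by blast
    qed simp
  qed
  have mU: "(\<Union>m\<in>Cells. PiE V (AA m)) \<in> sets ?M" by (rule sets.finite_UN[OF finC mB])
  have "measure ?M Ev \<le> measure ?M (Tie \<union> (\<Union>m\<in>Cells. PiE V (AA m)))"
    by (rule W.finite_measure_mono[OF sub sets.Un[OF Tie_null(1) mU]])
  also have "\<dots> \<le> measure ?M Tie + measure ?M (\<Union>m\<in>Cells. PiE V (AA m))"
    by (rule measure_Un_le[OF Tie_null(1) mU])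
  also have "measure ?M (\<Union>m\<in>Cells. PiE V (AA m)) \<le> (\<Sum>m\<in>Cells. measure ?M (PiE V (AA m)))"
    by (rule measure_UNION_le[OF finC mB])
  also have "\<dots> \<le> (\<Sum>m\<in>Cells. B)" by (rule sum_mono[OF bm])
  also have "\<dots> = real (card Cells) * B" by simp
  also have "card Cells = n ^ (k - 1)" unfolding Cells_def by (simp add: card_PiE)
  finally have "measure ?M Ev \<le> real (n ^ (k - 1)) * B" using Tie_null(2) by simp
  also have "real (n ^ (k - 1)) * B = (real r * \<beta>) ^ (k - 1) / real r ^ ((n - 1) * k + 1) * exp XX"
  proof -
    obtain n' where n': "n = n' + 2" using n2 by (metis add.commute le_Suc_ex)
    obtain k' where k': "k = k' + 1" using k1 by (metis add.commute le_Suc_ex)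
    have ex: "(n - 1) * k + 1 = (k - 1) + ((n - 2) * k + 2)" unfolding n' k' by (simp add: algebra_simps)
    have rpos: "0 < real r" using r2 by simp
    have "real (n ^ (k - 1)) * (\<beta> / real n) ^ (k - 1) = \<beta> ^ (k - 1)"
      using npos by (simp add: power_divide)
    have n0: "n \<noteq> 0" using n2 by simp
    then show ?thesis unfolding B_def ex power_add using rpos \<open>real (n ^ (k - 1)) * (\<beta> / real n) ^ (k - 1) = \<beta> ^ (k - 1)\<close>
      by (simp add: power_mult_distrib power_divide field_simps)
  qed
  finally show ?thesis .
qed

end


lemma num_bound:
  fixes n r k :: nat and Lg :: real
  assumes n3: "3 \<le> n" and r2: "2 \<le> r" and k1: "1 \<le> k" and kr: "k \<le> r" and rl: "real r \<le> ln (real n)"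
    and l1: "1 \<le> ln (real n)" and Lg: "Lg = ln (real n / ln (real n)) / real n"
    and sm: "(ln (real n) + 6) * ln (real n) / real n \<le> 1/2"
  shows "Lg ^ (k - 1) * exp ((real n - 2) * (- real k * ((real r - 1) / real r * Lg) + (real k - 1) * Lg + (real k - 1) * Lg / real n) + 4 * Lg)
         \<le> 2 * (ln (real n) / real n) powr (real k * (real r - 1) / real r)"
proof -
  define x where "x = ln (real n)"
  have npos: "0 < real n" using n3 by simp
  have rpos: "0 < real r" using r2 by simp
  have x1: "1 \<le> x" using l1 by (simp add: x_def)
  have xn: "x < real n" unfolding x_def using npos by simp
  define \<Lambda> where "\<Lambda> = ln (real n / x)"
  have q1: "1 < real n / x" using xn x1 by simp
  have L0: "0 < \<Lambda>" unfolding \<Lambda>_def using q1 by simp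
  have Lx: "\<Lambda> \<le> x"
  proof -
    have "\<Lambda> = x - ln x" unfolding \<Lambda>_def x_def using npos x1 x_def by (simp add: ln_div)
    moreover have "0 \<le> ln x" using x1 by simp
    ultimately show ?thesis by simp
  qed
  have Lgd: "Lg = \<Lambda> / real n" unfolding Lg \<Lambda>_def x_def ..
  have Lg0: "0 < Lg" unfolding Lgd using L0 npos by simp
  have Lgx: "Lg \<le> x / real n" unfolding Lgd using Lx npos by (simp add: divide_right_mono)
  define c where "c = real k / real r - 1"
  have c1: "-1 \<le> c" "c \<le> 0" unfolding c_def using kr rpos by (auto simp: field_simps)
  have e1: "- real k * ((real r - 1) / real r * Lg) + (real k - 1) * Lg = Lg * c"
    unfolding c_def using rpos by (simp add: field_simps)
  have e2: "(real n - 2) * ((real k - 1) * Lg / real n) \<le> real k * Lg"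
  proof -
    have "(real n - 2) / real n \<le> 1" using npos by simp
    moreover have "0 \<le> (real k - 1) * Lg" using k1 Lg0 by simp
    ultimately have "(real n - 2) / real n * ((real k - 1) * Lg) \<le> 1 * ((real k - 1) * Lg)"
      by (intro mult_right_mono) auto
    then show ?thesis using Lg0 by (simp add: field_simps)
  qed
  have ex: "(real n - 2) * (- real k * ((real r - 1) / real r * Lg) + (real k - 1) * Lg + (real k - 1) * Lg / real n) + 4 * Lg
      \<le> \<Lambda> * c + (real k + 6) * Lg"
  proof -
    have i1: "- real k * ((real r - 1) / real r * Lg) + (real k - 1) * Lg + (real k - 1) * Lg / real n
        = Lg * c + (real k - 1) * Lg / real n" using e1 by simp
    have i2: "(real n - 2) * (Lg * c) = \<Lambda> * c - 2 * Lg * c"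
    proof -
      have "real n * Lg = \<Lambda>" unfolding Lgd using npos by simp
      then show ?thesis by (simp add: algebra_simps)
    qed
    have i3: "- (2 * Lg * c) \<le> 2 * Lg"
    proof -
      have "Lg * (- c) \<le> Lg * 1" using c1 Lg0 by (intro mult_left_mono) auto
      then show ?thesis by simp
    qed
    have "(real n - 2) * (- real k * ((real r - 1) / real r * Lg) + (real k - 1) * Lg + (real k - 1) * Lg / real n) + 4 * Lg
       = (real n - 2) * (Lg * c) + (real n - 2) * ((real k - 1) * Lg / real n) + 4 * Lg"
      unfolding i1 by (simp add: distrib_left)
    moreover have i4: "(real k + 6) * Lg = real k * Lg + 6 * Lg" by (simp add: algebra_simps)
    ultimately show ?thesis using i2 i3 e2 by linarith
  qed
  have small: "(real k + 6) * Lg \<le> 1/2"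
  proof -
    have "(real k + 6) * Lg \<le> (x + 6) * (x / real n)"
      using kr rl Lgx Lg0 x1 unfolding x_def[symmetric] by (intro mult_mono) auto
    also have "\<dots> = (x + 6) * x / real n" by simp
    also have "\<dots> \<le> 1/2" using sm unfolding x_def .
    finally show ?thesis .
  qed
  have "exp ((real n - 2) * (- real k * ((real r - 1) / real r * Lg) + (real k - 1) * Lg + (real k - 1) * Lg / real n) + 4 * Lg)
        \<le> exp (\<Lambda> * c + (real k + 6) * Lg)" using ex by simp
  also have "\<dots> = exp (\<Lambda> * c) * exp ((real k + 6) * Lg)" by (simp add: exp_add)
  also have "\<dots> \<le> exp (\<Lambda> * c) * 2"
  proof -
    have "exp ((real k + 6) * Lg) \<le> exp (1/2)" using small by simp
    also have "\<dots> \<le> 2" by (rule exp_half_le2)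
    finally show ?thesis by simp
  qed
  finally have A: "exp ((real n - 2) * (- real k * ((real r - 1) / real r * Lg) + (real k - 1) * Lg + (real k - 1) * Lg / real n) + 4 * Lg)
        \<le> exp (\<Lambda> * c) * 2" .
  have xq: "0 < x / real n" using x1 npos by simp
  have B: "exp (\<Lambda> * c) = (x / real n) powr (- c)"
  proof -
    have "exp (\<Lambda> * c) = (real n / x) powr c" unfolding \<Lambda>_def powr_def using q1 npos x1 by (simp add: mult.commute)
    also have "real n / x = inverse (x / real n)" by simp
    also have "(inverse (x / real n)) powr c = (x / real n) powr (- c)"
      using xq npos x1 by (simp add: powr_def ln_div algebra_simps)
    finally show ?thesis .
  qed
  have C: "Lg ^ (k - 1) \<le> (x / real n) powr (real (k - 1))"
  proof -
    have "Lg ^ (k - 1) \<le> (x / real n) ^ (k - 1)" using Lg0 Lgx by (intro power_mono) auto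
    also have "\<dots> = (x / real n) powr (real (k - 1))" using xq by (simp add: powr_realpow)
    finally show ?thesis .
  qed
  have D: "real (k - 1) + - c = real k * (real r - 1) / real r"
    unfolding c_def using k1 rpos by (simp add: of_nat_diff field_simps)
  have "Lg ^ (k - 1) * exp ((real n - 2) * (- real k * ((real r - 1) / real r * Lg) + (real k - 1) * Lg + (real k - 1) * Lg / real n) + 4 * Lg)
      \<le> (x / real n) powr (real (k - 1)) * (exp (\<Lambda> * c) * 2)"
    using C A Lg0 by (intro mult_mono) auto
  also have "\<dots> = 2 * ((x / real n) powr (real (k - 1)) * (x / real n) powr (- c))" unfolding B by simp
  also have "\<dots> = 2 * (x / real n) powr (real k * (real r - 1) / real r)"
    unfolding powr_add[symmetric] D ..
  finally show ?thesis unfolding x_def .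
qed

lemma evN: "eventually (\<lambda>n::nat. 1 \<le> ln (real n) \<and> (ln (real n) + 6) * ln (real n) / real n \<le> 1/2 \<and> 3 \<le> n) sequentially"
proof -
  have a: "eventually (\<lambda>n::nat. 1 \<le> ln (real n)) sequentially" by real_asymp
  have b: "eventually (\<lambda>n::nat. (ln (real n) + 6) * ln (real n) / real n \<le> 1/2) sequentially" by real_asymp
  have c: "eventually (\<lambda>n::nat. 3 \<le> n) sequentially" by (rule eventually_ge_at_top)
  show ?thesis using a b c by (intro eventually_conj)
qed


theorem lemma2:
  shows "\<exists>N::nat. \<forall>n\<ge>N. \<forall>r::nat. 2 \<le> r \<and> real r < root 5 (ln (real n)) \<longrightarrow>
     (\<forall>(V::nat set) (E::nat set set) (k::nat) (i::nat) (C::nat \<Rightarrow> nat set).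
        finite V \<and> E \<subseteq> {e. e \<subseteq> V \<and> card e = n} \<and>
        1 \<le> k \<and> k \<le> i \<and> i \<le> r \<and> (\<forall>j\<in>{1..k}. C j \<in> E) \<longrightarrow>
        {\<sigma> \<in> space (weight_space V). ordered_chain n r V E k i C \<sigma>} \<in> sets (weight_space V) \<and>
        measure (weight_space V) {\<sigma> \<in> space (weight_space V). ordered_chain n r V E k i C \<sigma>}
          \<le> 2 * (ln (real n) / real n) powr (real k * (real r - 1) / real r)
              * (1 / real r ^ ((n - 1) * k + 1)))"
proof -
  obtain N0 where N0: "\<And>n. n \<ge> N0 \<Longrightarrow> 1 \<le> ln (real n) \<and> (ln (real n) + 6) * ln (real n) / real n \<le> 1/2 \<and> 3 \<le> n"
    using evN unfolding eventually_sequentially by blast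
  show ?thesis
  proof (rule exI[of _ N0], intro allI impI)
    fix n r :: nat and V :: "nat set" and E :: "nat set set" and k i :: nat and C :: "nat \<Rightarrow> nat set"
    assume nN: "N0 \<le> n" and rr: "2 \<le> r \<and> real r < root 5 (ln (real n))"
      and H: "finite V \<and> E \<subseteq> {e. e \<subseteq> V \<and> card e = n} \<and>
        1 \<le> k \<and> k \<le> i \<and> i \<le> r \<and> (\<forall>j\<in>{1..k}. C j \<in> E)"
    have l1: "1 \<le> ln (real n)" and sm: "(ln (real n) + 6) * ln (real n) / real n \<le> 1/2" and n3: "3 \<le> n"
      using N0[OF nN] by auto
    have r2: "2 \<le> r" using rr by simp
    have npos: "0 < real n" using n3 by simp
    have rl: "real r \<le> ln (real n)"
    proof -
      have "real r ^ 5 < root 5 (ln (real n)) ^ 5"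
        using rr by (intro power_strict_mono) auto
      also have "root 5 (ln (real n)) ^ 5 = ln (real n)" using l1 by simp
      finally have a: "real r ^ 5 < ln (real n)" .
      have b: "real r ^ 1 \<le> real r ^ 5" by (rule power_increasing) (use r2 in auto)
      have "real r \<le> real r ^ 5" using b by (simp only: power_one_right)
      then show ?thesis using a by linarith
    qed
    define Lg where "Lg = ln (real n / ln (real n)) / real n"
    have xn: "ln (real n) < real n" using npos by simp
    have Lg0: "0 < Lg"
    proof -
      have "1 < real n / ln (real n)" using xn l1 by simp
      then have "0 < ln (real n / ln (real n))" by simp
      then show ?thesis unfolding Lg_def using npos by simp
    qed
    have Lgx: "Lg \<le> ln (real n) / real n"
    proof -
      have "ln (real n / ln (real n)) = ln (real n) - ln (ln (real n))" using npos l1 by (simp add: ln_div)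
      moreover have "0 \<le> ln (ln (real n))" using l1 by simp
      ultimately show ?thesis unfolding Lg_def using npos by (simp add: divide_right_mono)
    qed
    have Lg1: "Lg < 1"
    proof -
      have "7 * ln (real n) \<le> (ln (real n) + 6) * ln (real n)"
        using l1 by (intro mult_right_mono) auto
      then have "ln (real n) / real n * 7 \<le> (ln (real n) + 6) * ln (real n) / real n"
        using npos by (simp add: divide_right_mono mult.commute)
      then have "ln (real n) / real n * 7 \<le> 1/2" using sm by linarith
      then show ?thesis using Lgx by linarith
    qed
    have ppe: "pp n r = (real r - 1) / real r * Lg" unfolding pp_def Lg_def ..
    have rpos: "0 < real r" using r2 by simp
    have p0: "0 < pp n r" unfolding ppe using r2 Lg0 by simp
    have p1: "pp n r < 1"
    proof -
      have "(real r - 1) / real r \<le> 1" using rpos by simp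
      then have "(real r - 1) / real r * Lg \<le> 1 * Lg" using Lg0 by (intro mult_right_mono) auto
      then have "pp n r \<le> Lg" unfolding ppe by simp
      then show ?thesis using Lg1 by simp
    qed
    interpret P: prm n r by unfold_locales (use r2 p0 p1 in auto)
    interpret Q: chn n r V E k i C by unfold_locales (use H n3 in auto)
    let ?Ev = "{\<sigma> \<in> space (weight_space V). ordered_chain n r V E k i C \<sigma>}"
    let ?B = "2 * (ln (real n) / real n) powr (real k * (real r - 1) / real r) * (1 / real r ^ ((n - 1) * k + 1))"
    show "?Ev \<in> sets (weight_space V) \<and> measure (weight_space V) ?Ev \<le> ?B"
    proof
      show "?Ev \<in> sets (weight_space V)" by (rule Q.Ev_sets)
      show "measure (weight_space V) ?Ev \<le> ?B"
      proof (cases "?Ev = {}")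
        case True
        have "0 \<le> ?B" using rpos by simp
        then show ?thesis unfolding True by simp
      next
        case False
        then obtain \<sigma>0 where s0: "\<sigma>0 \<in> ?Ev" by blast
        interpret R: chn2 n r V E k i C \<sigma>0 by unfold_locales (rule s0)
        have EB: "measure (weight_space V) ?Ev \<le> (real r * be n r) ^ (k - 1) / real r ^ ((n - 1) * k + 1) *
           exp ((real n - 2) * (real r * (real k * al n r + (real k - 1) * be n r + (real k - 1) * be n r / real n) - real k)
           + 4 * (real r * be n r))"
          by (rule R.Ev_bound)
        have rb: "real r * be n r = Lg" unfolding be_def ppe using r2 by (simp add: field_simps)
        have ra: "real r * al n r = 1 - pp n r" unfolding al_def using rpos by simp
        have xx: "real r * (real k * al n r + (real k - 1) * be n r + (real k - 1) * be n r / real n) - real k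
           = - real k * ((real r - 1) / real r * Lg) + (real k - 1) * Lg + (real k - 1) * Lg / real n"
        proof -
          have "real r * (real k * al n r + (real k - 1) * be n r + (real k - 1) * be n r / real n) - real k
              = real k * (real r * al n r) + (real k - 1) * (real r * be n r) + (real k - 1) * (real r * be n r) / real n - real k"
            by (simp add: algebra_simps)
          also have "\<dots> = real k * (1 - pp n r) + (real k - 1) * Lg + (real k - 1) * Lg / real n - real k"
            unfolding ra rb ..
          also have "\<dots> = - real k * ((real r - 1) / real r * Lg) + (real k - 1) * Lg + (real k - 1) * Lg / real n"
            unfolding ppe by (simp add: algebra_simps add_divide_distrib[symmetric])
          finally show ?thesis .
        qed
        have NB: "Lg ^ (k - 1) * exp ((real n - 2) * (- real k * ((real r - 1) / real r * Lg) + (real k - 1) * Lg + (real k - 1) * Lg / real n) + 4 * Lg)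
         \<le> 2 * (ln (real n) / real n) powr (real k * (real r - 1) / real r)"
          by (rule num_bound[OF n3 r2 Q.k1 _ rl l1 Lg_def sm]) (use Q.ki Q.ir in simp)
        have "measure (weight_space V) ?Ev \<le> Lg ^ (k - 1) / real r ^ ((n - 1) * k + 1) *
           exp ((real n - 2) * (- real k * ((real r - 1) / real r * Lg) + (real k - 1) * Lg + (real k - 1) * Lg / real n) + 4 * Lg)"
          using EB unfolding xx rb .
        also have "\<dots> = (Lg ^ (k - 1) * exp ((real n - 2) * (- real k * ((real r - 1) / real r * Lg) + (real k - 1) * Lg + (real k - 1) * Lg / real n) + 4 * Lg))
             * (1 / real r ^ ((n - 1) * k + 1))" by simp
        also have "\<dots> \<le> ?B" using NB rpos by (intro mult_right_mono) auto
        finally show ?thesis .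
      qed
    qed
  qed
qed


end
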